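(* Let $\delta>0$ and $0<c<\rho(1/\delta)$. Then there is $q_0=q_0(\delta,c)$ such that for every prime $q\ge q_0$ and all integers $0 \leq d_1 \leq d_2 \leq cq$ satisfying $n^{d_2} \equiv n^{d_1} \pmod{q}$ for all integers $1 \leq n \leq q^\delta$, we have $d_1 = d_2$.
   Context: $\rho$ is the Dickman–de Bruijn function: the unique continuous solution of $u\rho'(u)+\rho(u-1)=0$ for $u>1$ with $\rho(u)=1$ on $[0,1]$. *)

theory Defs
  imports "HOL-Analysis.Analysis" "HOL-Number_Theory.Number_Theory"
begin

text \<open>Characterisation of the Dickman--de Bruijn function: continuous on [0,\<infinity>),
  equal to 1 on [0,1], and u \<rho>'(u) + \<rho>(u-1) = 0 for u > 1.
  By convention we set \<rho>(u) = 0 for u < 0 (irrelevant for the statement).\<close>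
definition is_dickman :: "(real \<Rightarrow> real) \<Rightarrow> bool" where
  "is_dickman f \<longleftrightarrow>
     continuous_on {0..} f \<and>
     (\<forall>u. 0 \<le> u \<and> u \<le> 1 \<longrightarrow> f u = 1) \<and>
     (\<forall>u. u < 0 \<longrightarrow> f u = 0) \<and>
     (\<forall>u>1. \<exists>D. (f has_real_derivative D) (at u) \<and> u * D + f (u - 1) = 0)"

definition dickman_rho :: "real \<Rightarrow> real" where
  "dickman_rho = (THE f. is_dickman f)"

end

theory Submission
  imports Defs
begin

fun FF :: "nat \<Rightarrow> real \<Rightarrow> real" where
  "FF 0 = (\<lambda>u. if u < 0 then 0 else 1)"
| "FF (Suc n) = (\<lambda>u. if u \<le> 1 then (if u < 0 then 0 else 1)
       else 1 - integral {1..u} (\<lambda>t. FF n (t - 1) / t))"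

lemma FF_Suc_gt: "u > 1 \<Longrightarrow> FF (Suc n) u = 1 - integral {1..u} (\<lambda>t. FF n (t - 1) / t)"
  by simp

lemma FF_le1: "u \<le> 1 \<Longrightarrow> FF n u = (if u < 0 then 0 else 1)"
  by (cases n) auto

lemma FF_agree_Suc: "u \<le> real n + 1 \<Longrightarrow> FF (Suc n) u = FF n u"
proof (induction n arbitrary: u)
  case 0
  then show ?case by (simp add: FF_le1)
next
  case (Suc n)
  show ?case
  proof (cases "u \<le> 1")
    case True
    then show ?thesis by (simp add: FF_le1 del: FF.simps)
  next
    case False
    have "integral {1..u} (\<lambda>t. FF (Suc n) (t - 1) / t) = integral {1..u} (\<lambda>t. FF n (t - 1) / t)"
      by (rule integral_cong) (use Suc in \<open>auto simp del: FF.simps\<close>)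
    then show ?thesis using False by (simp only: FF_Suc_gt not_le)
  qed
qed

lemma FF_agree: "u \<le> real n + 1 \<Longrightarrow> n \<le> m \<Longrightarrow> FF m u = FF n u"
proof (induction m)
  case 0
  then show ?case by simp
next
  case (Suc m)
  show ?case
  proof (cases "n = Suc m")
    case False
    then have "n \<le> m" using Suc by simp
    then have "FF (Suc m) u = FF m u" using Suc by (intro FF_agree_Suc) simp
    then show ?thesis using Suc \<open>n \<le> m\<close> by simp
  qed simp
qed

lemma FF_cont: "continuous_on {0..real n + 1} (FF n)"
proof (induction n)
  case 0
  show ?case by (rule continuous_on_eq[of _ "\<lambda>u. 1"]) auto
next
  case (Suc n)
  define h where "h = (\<lambda>t. FF n (t - 1) / t)"
  have hc: "continuous_on {1..real n + 2} h"
    unfolding h_def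
  proof (intro continuous_intros)
    show "continuous_on {1..real n + 2} (\<lambda>t. FF n (t - 1))"
      by (rule continuous_on_compose2[OF Suc.IH]) (auto intro!: continuous_intros)
  qed auto
  have ic: "continuous_on {1..real n + 2} (\<lambda>v. integral {1..v} h)"
    by (rule indefinite_integral_continuous_1) (rule integrable_continuous_real[OF hc])
  have "continuous_on {0..real n + 2} (\<lambda>u. 1 - integral {1..max 1 u} h)"
    by (intro continuous_intros continuous_on_compose2[OF ic]) auto
  then have "continuous_on {0..real (Suc n) + 1} (\<lambda>u. 1 - integral {1..max 1 u} h)"
    by (simp add: add.commute)
  then show ?case
  proof (rule continuous_on_eq)
    fix u assume u: "u \<in> {0..real (Suc n) + 1}"
    have u: "u \<in> {0..real n + 2}" using u by simp
    show "1 - integral {1..max 1 u} h = FF (Suc n) u"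
    proof (cases "u \<le> 1")
      case True
      then show ?thesis using u by (simp add: max_def del: FF.simps) (simp add: FF_le1)
    next
      case False
      then show ?thesis by (simp add: max_def h_def FF_Suc_gt del: FF.simps)
    qed
  qed
qed

lemma FF_deriv:
  assumes "1 < u" "u < real n + 2"
  shows "(FF (Suc n) has_real_derivative (- (FF n (u - 1) / u))) (at u)"
proof -
  define h where "h = (\<lambda>t. FF n (t - 1) / t)"
  have hc: "continuous_on {1..real n + 2} h"
    unfolding h_def
  proof (intro continuous_intros)
    show "continuous_on {1..real n + 2} (\<lambda>t. FF n (t - 1))"
      by (rule continuous_on_compose2[OF FF_cont]) (auto intro!: continuous_intros)
  qed auto
  have "((\<lambda>v. integral {1..v} h) has_real_derivative h u) (at u within {1..real n + 2})"
    by (rule integral_has_real_derivative[OF hc]) (use assms in auto)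
  moreover have "at u within {1..real n + 2} = at u"
    by (rule at_within_interior) (use assms in auto)
  ultimately have "((\<lambda>v. integral {1..v} h) has_real_derivative h u) (at u)" by simp
  then have "((\<lambda>v. 1 - integral {1..v} h) has_real_derivative - (FF n (u - 1) / u)) (at u)"
    by (auto intro!: derivative_eq_intros simp: h_def)
  then show ?thesis
    by (rule has_field_derivative_transform_within_open[where S = "{1<..}"])
       (use assms in \<open>auto simp: h_def FF_Suc_gt simp del: FF.simps\<close>)
qed

definition rho0 :: "real \<Rightarrow> real" where
  "rho0 u = FF (nat \<lceil>u\<rceil>) u"

lemma rho0_eq: "u \<le> real m + 1 \<Longrightarrow> rho0 u = FF m u"
proof -
  assume a: "u \<le> real m + 1"
  define k where "k = nat \<lceil>u\<rceil>"
  have k: "u \<le> real k + 1" unfolding k_def by linarith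
  have "FF k u = FF (min k m) u" by (rule FF_agree) (use a k in \<open>auto simp: min_def\<close>)
  moreover have "FF m u = FF (min k m) u" by (rule FF_agree) (use a k in \<open>auto simp: min_def\<close>)
  ultimately show ?thesis by (simp add: rho0_def k_def)
qed

lemma is_dickman_rho0: "is_dickman rho0"
  unfolding is_dickman_def
proof (intro conjI allI impI)
  show "continuous_on {0..} rho0"
    unfolding continuous_on_eq_continuous_within
  proof
    fix x :: real assume x: "x \<in> {0..}"
    define m where "m = nat \<lceil>x\<rceil> + 1"
    have xm: "x < real m + 1" unfolding m_def by linarith
    have "continuous_on {0..real m + 1} rho0"
      by (rule continuous_on_eq[OF FF_cont]) (auto simp: rho0_eq)
    then have "continuous (at x within {0..real m + 1}) rho0"
      using x xm by (simp add: continuous_on_eq_continuous_within)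
    moreover have "at x within {0..} = at x within {0..real m + 1}"
      by (rule at_within_nhd[of _ "{..<real m + 1}"]) (use xm in auto)
    ultimately show "continuous (at x within {0..}) rho0" by simp
  qed
next
  fix u :: real assume "0 \<le> u \<and> u \<le> 1"
  then show "rho0 u = 1" using rho0_eq[of u 0] by simp
next
  fix u :: real assume "u < 0"
  then show "rho0 u = 0" using rho0_eq[of u 0] by simp
next
  fix u :: real assume u: "u > 1"
  define m where "m = nat \<lceil>u\<rceil>"
  have um: "u < real m + 2" unfolding m_def by linarith
  have "(FF (Suc m) has_real_derivative (- (FF m (u - 1) / u))) (at u)"
    by (rule FF_deriv) (use u um in auto)
  then have "(rho0 has_real_derivative (- (FF m (u - 1) / u))) (at u)"
    by (rule has_field_derivative_transform_within_open[where S = "{..<real m + 2}"])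
       (use um rho0_eq[of _ "Suc m"] in \<open>auto simp del: FF.simps\<close>)
  moreover have "FF m (u - 1) = rho0 (u - 1)" using um rho0_eq[of "u - 1" m] by simp
  ultimately show "\<exists>D. (rho0 has_real_derivative D) (at u) \<and> u * D + rho0 (u - 1) = 0"
    using u by (intro exI[of _ "- (rho0 (u - 1) / u)"]) auto
qed

lemma dickman_deriv:
  assumes "is_dickman f" "u > 1"
  shows "(f has_real_derivative (- (f (u - 1) / u))) (at u)"
proof -
  obtain D where D: "(f has_real_derivative D) (at u)" "u * D + f (u - 1) = 0"
    using assms unfolding is_dickman_def by blast
  then have "D = - (f (u - 1) / u)" using assms(2) by (simp add: field_simps)
  then show ?thesis using D by simp
qed

lemma dickman_unique:
  assumes f: "is_dickman f" and g: "is_dickman g"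
  shows "f = g"
proof -
  have "\<forall>u. u \<le> real n + 1 \<longrightarrow> f u = g u" for n :: nat
  proof (induction n)
    case 0
    show ?case using f g unfolding is_dickman_def by (metis not_le of_nat_0 add_0)
  next
    case (Suc n)
    show ?case
    proof (intro allI impI)
      fix u :: real assume u: "u \<le> real (Suc n) + 1"
      show "f u = g u"
      proof (cases "u \<le> real n + 1")
        case True then show ?thesis using Suc by blast
      next
        case False
        let ?h = "\<lambda>v. f v - g v"
        have "continuous_on {0..} ?h" using f g unfolding is_dickman_def
          by (auto intro!: continuous_intros)
        then have hc: "continuous_on {real n + 1..u} ?h"
          by (rule continuous_on_subset) auto
        have "?h u = ?h (real n + 1)"
        proof (rule DERIV_isconst_end[OF _ hc])
          fix x assume x: "real n + 1 < x" "x < u"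
          have "(?h has_real_derivative (- (f (x - 1) / x)) - (- (g (x - 1) / x))) (at x)"
            using x by (intro derivative_intros dickman_deriv f g) auto
          moreover have "f (x - 1) = g (x - 1)" using Suc.IH x u by auto
          ultimately show "(?h has_real_derivative 0) (at x)" by simp
        qed (use False in auto)
        moreover have "?h (real n + 1) = 0" using Suc by auto
        ultimately show ?thesis by simp
      qed
    qed
  qed
  then show ?thesis
  proof (intro ext)
    fix u :: real
    assume H: "\<And>n. \<forall>u. u \<le> real n + 1 \<longrightarrow> f u = g u"
    have "u \<le> real (nat \<lceil>u\<rceil>) + 1" by linarith
    then show "f u = g u" using H by blast
  qed
qed

lemma is_dickman_rho: "is_dickman dickman_rho"
proof -
  have "dickman_rho = rho0"
    unfolding dickman_rho_def
    by (rule the_equality) (auto intro: is_dickman_rho0 dickman_unique)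
  then show ?thesis using is_dickman_rho0 by simp
qed

lemma prod_primes_dvd:
  fixes n :: nat
  assumes "finite A" "\<And>p. p \<in> A \<Longrightarrow> prime p \<and> p dvd n"
  shows "prod (\<lambda>p. p) A dvd n"
  using assms
proof (induction A rule: finite_induct)
  case empty
  then show ?case by simp
next
  case (insert p A)
  have IH: "prod (\<lambda>p. p) A dvd n" using insert by auto
  have pp: "prime p" "p dvd n" using insert by auto
  have "\<not> p dvd prod (\<lambda>p. p) A"
  proof
    assume "p dvd prod (\<lambda>p. p) A"
    then obtain q where "q \<in> A" "p dvd q" using prime_dvd_prod_iff[OF insert(1) pp(1)] by auto
    then have "p = q" using insert(4)[of q] pp primes_dvd_imp_eq by blast
    then show False using \<open>q \<in> A\<close> insert(2) by simp
  qed
  then have "coprime p (prod (\<lambda>p. p) A)" using pp(1) prime_imp_coprime by blast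
  then have "p * prod (\<lambda>p. p) A dvd n" using divides_mult IH pp(2) by blast
  then show ?case using insert by simp
qed

lemma central_binom_bound: "(2 * m + 1) choose m \<le> 4 ^ m"
proof -
  have sym: "(2 * m + 1) choose m = (2 * m + 1) choose (m + 1)"
    using binomial_symmetric[of m "2 * m + 1"] by simp
  have "((2 * m + 1) choose m) + ((2 * m + 1) choose (m + 1)) = (\<Sum>k\<in>{m, m+1}. (2 * m + 1) choose k)"
    by simp
  also have "\<dots> \<le> (\<Sum>k\<le>2 * m + 1. (2 * m + 1) choose k)"
    by (rule sum_mono2) auto
  also have "\<dots> = 2 ^ (2 * m + 1)" by (rule choose_row_sum)
  also have "\<dots> = 2 * 4 ^ m" by (simp add: power_mult)
  finally show ?thesis using sym by simp
qed

lemma prod_primes_le: "prod (\<lambda>p. p) {p::nat. prime p \<and> p \<le> n} \<le> 4 ^ n"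
proof (induction n rule: less_induct)
  case (less n)
  show ?case
  proof (cases "n \<le> 2")
    case True
    show ?thesis
    proof (cases "n \<le> 1")
      case True
      have "\<not> (prime p \<and> p \<le> n)" for p
        using prime_ge_2_nat[of p] True by linarith
      then have e: "{p::nat. prime p \<and> p \<le> n} = {}"
        by blast
      show ?thesis unfolding e by simp
    next
      case False
      then have n2: "n = 2" using \<open>n \<le> 2\<close> by simp
      have "{p::nat. prime p \<and> p \<le> n} = {2}"
      proof
        have "prime p \<and> p \<le> n \<Longrightarrow> p = 2" for p
          using prime_ge_2_nat[of p] n2 by linarith
        then show "{p::nat. prime p \<and> p \<le> n} \<subseteq> {2}"
          by blast
      qed (use n2 in simp)
      then show ?thesis using n2 by simp
    qed
  next
    case False
    show ?thesis
    proof (cases "even n")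
      case True
      have "\<not> prime n"
      proof
        assume "prime n"
        then have "odd n" using False prime_odd_nat[of n] by simp
        then show False using True by simp
      qed
      have "p \<le> n \<longleftrightarrow> p \<le> n - 1" if "prime p" for p
      proof -
        have "p \<noteq> n" using that \<open>\<not> prime n\<close> by metis
        then show ?thesis by linarith
      qed
      then have eqs: "{p::nat. prime p \<and> p \<le> n} = {p. prime p \<and> p \<le> n - 1}"
        by blast
      have "(4::nat) ^ (n - 1) \<le> 4 ^ n" by (rule power_increasing) simp_all
      moreover have "prod (\<lambda>p. p) {p::nat. prime p \<and> p \<le> n - 1} \<le> 4 ^ (n - 1)"
        using less[of "n - 1"] False by simp
      ultimately show ?thesis unfolding eqs by linarith
    next
      case odd: False
      then obtain m where n: "n = 2 * m + 1" using oddE by blast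
      have m1: "m \<ge> 1" using False n by simp
      let ?A = "{p::nat. prime p \<and> p \<le> m + 1}"
      let ?B = "{p::nat. prime p \<and> m + 1 < p \<and> p \<le> 2 * m + 1}"
      have finA: "finite ?A" by (rule finite_subset[of _ "{..m+1}"]) auto
      have finB: "finite ?B" by (rule finite_subset[of _ "{..2*m+1}"]) auto
      have split: "{p::nat. prime p \<and> p \<le> n} = ?A \<union> ?B" using n by auto
      have disj: "?A \<inter> ?B = {}" by auto
      have "prod (\<lambda>p. p) ?B dvd (2 * m + 1) choose m"
      proof (rule prod_primes_dvd[OF finB])
        fix p assume p: "p \<in> ?B"
        have eq: "fact m * fact (m + 1) * ((2 * m + 1) choose m) = fact (2 * m + 1)"
          using binomial_fact_lemma[of m "2 * m + 1"] by (simp add: mult_2)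
        have pr: "prime p" and pm: "m + 1 < p" "p \<le> 2 * m + 1" using p by auto
        have "p dvd fact (2 * m + 1)" using pm by (subst prime_dvd_fact_iff[OF pr]) simp
        moreover have "\<not> p dvd fact m" using pm by (subst prime_dvd_fact_iff[OF pr]) simp
        moreover have "\<not> p dvd fact (m + 1)" using pm by (subst prime_dvd_fact_iff[OF pr]) simp
        ultimately have "p dvd (fact m * fact (m + 1)) * ((2 * m + 1) choose m)"
          "\<not> p dvd fact m * fact (m + 1)"
          using eq prime_dvd_mult_iff[OF pr, of "fact m" "fact (m + 1)"] by (simp_all del: fact_Suc)
        then have "p dvd (2 * m + 1) choose m"
          using prime_dvd_mult_iff[OF pr] by blast
        then show "prime p \<and> p dvd (2 * m + 1) choose m" using pr by simp
      qed
      then have "prod (\<lambda>p. p) ?B \<le> (2 * m + 1) choose m"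
        by (rule dvd_imp_le) (simp add: zero_less_binomial_iff)
      then have B: "prod (\<lambda>p. p) ?B \<le> 4 ^ m"
        using central_binom_bound[of m] by linarith
      have A: "prod (\<lambda>p. p) ?A \<le> 4 ^ (m + 1)" using less[of "m + 1"] n m1 by simp
      have "prod (\<lambda>p. p) {p::nat. prime p \<and> p \<le> n} = prod (\<lambda>p. p) ?A * prod (\<lambda>p. p) ?B"
        unfolding split by (rule prod.union_disjoint[OF finA finB disj])
      also have "\<dots> \<le> 4 ^ (m + 1) * 4 ^ m" using A B by (rule mult_le_mono)
      also have "\<dots> = 4 ^ (m + 1 + m)" by (rule power_add[symmetric])
      also have "\<dots> = 4 ^ n" using n by (simp add: mult_2)
      finally show ?thesis .
    qed
  qed
qed

lemma theta_le: "(\<Sum>p\<in>{p::nat. prime p \<and> p \<le> n}. ln (real p)) \<le> real n * ln 4"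
proof -
  have fin: "finite {p::nat. prime p \<and> p \<le> n}" by (rule finite_subset[of _ "{..n}"]) auto
  have pos: "\<And>p. p \<in> {p::nat. prime p \<and> p \<le> n} \<Longrightarrow> real p > 0"
    using prime_gt_0_nat by simp
  have "(\<Sum>p\<in>{p::nat. prime p \<and> p \<le> n}. ln (real p)) = ln (\<Prod>p\<in>{p::nat. prime p \<and> p \<le> n}. real p)"
    by (rule ln_prod[symmetric]) (use fin pos in force)+
  also have "(\<Prod>p\<in>{p::nat. prime p \<and> p \<le> n}. real p) = real (prod (\<lambda>p. p) {p::nat. prime p \<and> p \<le> n})"
    by simp
  also have "ln \<dots> \<le> ln (real (4 ^ n))"
  proof (subst ln_le_cancel_iff)
    show "0 < real (prod (\<lambda>p. p) {p::nat. prime p \<and> p \<le> n})"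
    proof -
      have "0 < prod (\<lambda>p. p) {p::nat. prime p \<and> p \<le> n}"
        by (rule prod_pos) (use prime_gt_0_nat in simp)
      then show ?thesis by (simp only: of_nat_0_less_iff)
    qed
  qed (use prod_primes_le[of n] in \<open>simp_all del: of_nat_prod of_nat_power\<close>)
  also have "\<dots> = real n * ln 4" by (simp add: ln_realpow)
  finally show ?thesis .
qed

lemma mult_fact_rec:
  fixes p n :: nat assumes p: "prime p"
  shows "multiplicity p (fact n :: nat) = n div p + multiplicity p (fact (n div p) :: nat)"
proof (induction n)
  case 0
  show ?case by simp
next
  case (Suc n)
  have pe: "prime_elem p" using p by simp
  have p0: "p \<noteq> 0" "p > 0" using p prime_gt_0_nat by auto
  have ff: "(fact (Suc n) :: nat) = Suc n * fact n" by simp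
  have fs: "multiplicity p (fact (Suc n) :: nat) = multiplicity p (Suc n) + multiplicity p (fact n :: nat)"
    unfolding ff by (rule prime_elem_multiplicity_mult_distrib[OF pe]) simp_all
  show ?case
  proof (cases "p dvd Suc n")
    case False
    have "Suc n div p = n div p" using False by (simp add: div_Suc dvd_eq_mod_eq_0)
    moreover have "multiplicity p (Suc n) = 0" using False by (rule not_dvd_imp_multiplicity_0)
    ultimately show ?thesis using fs Suc.IH by simp
  next
    case True
    then obtain j where j: "Suc n = p * j" by (elim dvdE)
    have j0: "j \<ge> 1" using j by (cases j) auto
    have d1: "Suc n div p = j" using j p0 by simp
    have "Suc n mod p = 0" using True by simp
    then have "Suc n div p = Suc (n div p)" by (simp add: div_Suc)
    then have d2: "n div p = j - 1" using d1 by simp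
    have m1: "multiplicity p (Suc n) = Suc (multiplicity p j)"
      unfolding j by (rule multiplicity_times_same) (use p0 j0 prime_gt_1_nat[OF p] in simp_all)
    have fj: "(fact j :: nat) = j * fact (j - 1)" using j0 fact_reduce[of j, where 'a = nat] by simp
    have m2: "multiplicity p (fact j :: nat) = multiplicity p j + multiplicity p (fact (j - 1) :: nat)"
      unfolding fj by (rule prime_elem_multiplicity_mult_distrib[OF pe]) (use j0 in simp_all)
    show ?thesis using fs Suc.IH d1 d2 m1 m2 j0 by simp
  qed
qed

lemma mult_fact_ge:
  fixes p n :: nat assumes p: "prime p"
  shows "n div p \<le> multiplicity p (fact n :: nat)"
  using mult_fact_rec[OF p, of n] by simp

lemma mult_fact_le:
  fixes p n :: nat assumes p: "prime p"
  shows "real (multiplicity p (fact n :: nat)) \<le> real n / (real p - 1)"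
proof (induction n rule: less_induct)
  case (less n)
  have p2: "real p \<ge> 2" using prime_ge_2_nat[OF p] by simp
  show ?case
  proof (cases "n = 0")
    case True
    then show ?thesis by simp
  next
    case False
    have lt: "n div p < n" using False prime_ge_2_nat[OF p] by (intro div_less_dividend) auto
    define D where "D = real (n div p)"
    have IH: "real (multiplicity p (fact (n div p) :: nat)) \<le> D / (real p - 1)"
      using less[OF lt] by (simp add: D_def)
    have Dle: "D \<le> real n / real p"
    proof -
      have "real p * D \<le> real n"
        unfolding D_def using times_div_less_eq_dividend[of p n] by (metis of_nat_le_iff of_nat_mult)
      then show ?thesis using p2 by (simp add: field_simps)
    qed
    have "real (multiplicity p (fact n :: nat)) = D + real (multiplicity p (fact (n div p) :: nat))"
      using mult_fact_rec[OF p, of n] by (simp add: D_def)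
    also have "\<dots> \<le> D + D / (real p - 1)" using IH by simp
    also have "\<dots> = D * real p / (real p - 1)" using p2 by (simp add: field_simps)
    also have "\<dots> \<le> (real n / real p) * real p / (real p - 1)"
      using Dle p2 by (intro divide_right_mono mult_right_mono) auto
    also have "\<dots> = real n / (real p - 1)" using p2 by simp
    finally show ?thesis .
  qed
qed

lemma ln_fact_eq:
  "ln (fact n :: real) = (\<Sum>p\<in>{p::nat. prime p \<and> p \<le> n}. real (multiplicity p (fact n :: nat)) * ln (real p))"
proof -
  have pf: "prime_factors (fact n :: nat) = {p::nat. prime p \<and> p \<le> n}"
    unfolding prime_factors_fact using prime_ge_2_nat by auto
  have fin: "finite {p::nat. prime p \<and> p \<le> n}" by (rule finite_subset[of _ "{..n}"]) auto
  have "(fact n :: nat) = (\<Prod>p\<in>{p::nat. prime p \<and> p \<le> n}. p ^ multiplicity p (fact n :: nat))"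
    using prime_factorization_nat[of "fact n"] pf by simp
  then have "(fact n :: real) = real (\<Prod>p\<in>{p::nat. prime p \<and> p \<le> n}. p ^ multiplicity p (fact n :: nat))"
    by (metis of_nat_fact)
  also have "\<dots> = (\<Prod>p\<in>{p::nat. prime p \<and> p \<le> n}. real p ^ multiplicity p (fact n :: nat))"
    by simp
  finally have "ln (fact n :: real) = ln (\<Prod>p\<in>{p::nat. prime p \<and> p \<le> n}. real p ^ multiplicity p (fact n :: nat))"
    by simp
  also have "\<dots> = (\<Sum>p\<in>{p::nat. prime p \<and> p \<le> n}. ln (real p ^ multiplicity p (fact n :: nat)))"
    by (rule ln_prod[OF fin]) (use prime_gt_0_nat in simp)
  also have "\<dots> = (\<Sum>p\<in>{p::nat. prime p \<and> p \<le> n}. real (multiplicity p (fact n :: nat)) * ln (real p))"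
    by (rule sum.cong) (use prime_gt_0_nat in \<open>simp_all add: ln_realpow\<close>)
  finally show ?thesis .
qed

lemma ln_fact_lower: "real n * ln (real n) - real n \<le> ln (fact n :: real)"
proof (cases "n = 0")
  case True
  then show ?thesis by simp
next
  case False
  let ?x = "real n"
  have sm: "(\<lambda>k. ?x ^ k /\<^sub>R fact k) sums exp ?x" by (rule exp_converges)
  have "(\<Sum>k\<in>{n}. ?x ^ k /\<^sub>R fact k) \<le> (\<Sum>k. ?x ^ k /\<^sub>R fact k)"
    by (rule sum_le_suminf) (use sm sums_summable in auto)
  then have le: "?x ^ n / fact n \<le> exp ?x" using sums_unique[OF sm] by (simp add: divide_inverse mult.commute)
  have pos: "?x ^ n / fact n > 0" using False by simp
  have "ln (?x ^ n / fact n) \<le> ?x" using le pos by (metis ln_exp ln_le_cancel_iff exp_gt_zero)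
  moreover have "ln (?x ^ n / fact n) = ?x * ln ?x - ln (fact n)"
    using False by (simp add: ln_div ln_realpow)
  ultimately show ?thesis by simp
qed

lemma ln_fact_upper: "ln (fact n :: real) \<le> real n * ln (real n)"
proof (cases "n = 0")
  case True
  then show ?thesis by simp
next
  case False
  have "(fact n :: real) \<le> real n ^ n" using fact_le_power[of n] by simp
  then have "ln (fact n :: real) \<le> ln (real n ^ n)" by (subst ln_le_cancel_iff) (use False in auto)
  then show ?thesis using False by (simp add: ln_realpow)
qed

lemma E_sum_aux: "(\<Sum>k\<in>{2..Suc n}. ln (real k) / (real k * (real k - 1))) + (ln (real (Suc n)) + 2) / real (Suc n) \<le> 2"
proof (induction n)
  case 0
  then show ?case by simp
next
  case (Suc n)
  define N where "N = real (Suc n)"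
  have N1: "N \<ge> 1" unfolding N_def by simp
  define a where "a = ln (N + 1)"
  define b where "b = ln N"
  have "a - b = ln ((N + 1) / N)" unfolding a_def b_def using N1 by (simp add: ln_div)
  also have "\<dots> \<le> (N + 1) / N - 1" using N1 by (intro ln_le_minus_one) simp
  also have "\<dots> = 1 / N" using N1 by (simp add: field_simps)
  finally have ab: "a - b \<le> 1 / N" .
  have key: "(N + 1) * (a - b) \<le> 2"
  proof -
    have "(N + 1) * (a - b) \<le> (N + 1) * (1 / N)" using ab N1 by (intro mult_left_mono) auto
    also have "\<dots> \<le> 2" using N1 by (simp add: field_simps)
    finally show ?thesis .
  qed
  have step: "a / ((N + 1) * N) + (a + 2) / (N + 1) \<le> (b + 2) / N"
  proof -
    have nz: "N \<noteq> 0" "N + 1 \<noteq> 0" using N1 by auto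
    have "(a + 2) / (N + 1) = (N * (a + 2)) / ((N + 1) * N)" using nz by simp
    then have "a / ((N + 1) * N) + (a + 2) / (N + 1) = (a + N * (a + 2)) / ((N + 1) * N)"
      by (simp add: add_divide_distrib)
    also have "\<dots> \<le> ((N + 1) * (b + 2)) / ((N + 1) * N)"
      using key N1 by (intro divide_right_mono) (auto simp: algebra_simps)
    also have "\<dots> = (b + 2) / N" using N1 by simp
    finally show ?thesis .
  qed
  have set: "{2..Suc (Suc n)} = insert (Suc (Suc n)) {2..Suc n}" by (rule atLeastAtMostSuc_conv) simp
  have "(\<Sum>k\<in>{2..Suc (Suc n)}. ln (real k) / (real k * (real k - 1)))
      = a / ((N + 1) * N) + (\<Sum>k\<in>{2..Suc n}. ln (real k) / (real k * (real k - 1)))"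
    unfolding set by (simp add: a_def N_def add.commute)
  moreover have "ln (real (Suc (Suc n))) = a" "real (Suc (Suc n)) = N + 1"
    by (simp_all add: a_def N_def add.commute)
  ultimately show ?case using Suc.IH step by (simp add: b_def N_def)
qed

lemma E_sum: "(\<Sum>p\<in>{p::nat. prime p \<and> p \<le> n}. ln (real p) / (real p * (real p - 1))) \<le> 2"
proof (cases "n = 0")
  case True
  have e: "{p::nat. prime p \<and> p \<le> n} = {}" using True by auto
  show ?thesis unfolding e by simp
next
  case False
  have "(\<Sum>p\<in>{p::nat. prime p \<and> p \<le> n}. ln (real p) / (real p * (real p - 1)))
        \<le> (\<Sum>k\<in>{2..n}. ln (real k) / (real k * (real k - 1)))"
  proof (rule sum_mono2)
    show "{p::nat. prime p \<and> p \<le> n} \<subseteq> {2..n}" using prime_ge_2_nat by auto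
    show "\<And>k. k \<in> {2..n} - {p. prime p \<and> p \<le> n} \<Longrightarrow> 0 \<le> ln (real k) / (real k * (real k - 1))"
      by (auto intro!: divide_nonneg_nonneg)
  qed simp
  also have "\<dots> \<le> 2"
  proof -
    obtain m where m: "n = Suc m" using False by (cases n) auto
    have "0 \<le> (ln (real (Suc m)) + 2) / real (Suc m)" by (intro divide_nonneg_nonneg) auto
    then show ?thesis using E_sum_aux[of m] unfolding m by linarith
  qed
  finally show ?thesis .
qed

lemma ln2_le1: "ln (2::real) \<le> 1"
  using ln_le_minus_one[of 2] by simp

lemma mertens_nat:
  assumes n: "n \<ge> 1"
  shows "(\<Sum>p\<in>{p::nat. prime p \<and> p \<le> n}. ln (real p) / real p) \<le> ln (real n) + 2"
    and "(\<Sum>p\<in>{p::nat. prime p \<and> p \<le> n}. ln (real p) / real p) \<ge> ln (real n) - 3"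
proof -
  define P where "P = {p::nat. prime p \<and> p \<le> n}"
  define A where "A = (\<Sum>p\<in>P. ln (real p) / real p)"
  define E where "E = (\<Sum>p\<in>P. ln (real p) / (real p * (real p - 1)))"
  define \<theta> where "\<theta> = (\<Sum>p\<in>P. ln (real p))"
  have fin: "finite P" unfolding P_def by (rule finite_subset[of _ "{..n}"]) auto
  have E2: "E \<le> 2" unfolding E_def P_def by (rule E_sum)
  have th: "\<theta> \<le> real n * ln 4" unfolding \<theta>_def P_def by (rule theta_le)
  have ln4: "ln (4::real) \<le> 2"
  proof -
    have "ln (4::real) = ln (2 * 2)" by simp
    also have "\<dots> = ln 2 + ln 2" by (subst ln_mult) auto
    finally show ?thesis using ln2_le1 by simp
  qed
  have lf: "ln (fact n :: real) = (\<Sum>p\<in>P. real (multiplicity p (fact n :: nat)) * ln (real p))"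
    unfolding P_def by (rule ln_fact_eq)
  have up: "ln (fact n :: real) \<le> real n * A + real n * E"
  proof -
    have "ln (fact n :: real) \<le> (\<Sum>p\<in>P. real n * (ln (real p) / real p) + real n * (ln (real p) / (real p * (real p - 1))))"
      unfolding lf
    proof (rule sum_mono)
      fix p assume "p \<in> P"
      then have pr: "prime p" unfolding P_def by simp
      have p2: "real p \<ge> 2" using prime_ge_2_nat[OF pr] by simp
      have lnp: "ln (real p) \<ge> 0" using p2 by simp
      have "real (multiplicity p (fact n :: nat)) * ln (real p) \<le> (real n / (real p - 1)) * ln (real p)"
        by (rule mult_right_mono[OF mult_fact_le[OF pr] lnp])
      also have "real n / (real p - 1) = real n / real p + real n / (real p * (real p - 1))"
        using p2 by (simp add: field_simps)
      finally show "real (multiplicity p (fact n :: nat)) * ln (real p)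
          \<le> real n * (ln (real p) / real p) + real n * (ln (real p) / (real p * (real p - 1)))"
        by (simp add: algebra_simps)
    qed
    also have "\<dots> = real n * A + real n * E"
      unfolding A_def E_def by (simp add: sum.distrib sum_distrib_left)
    finally show ?thesis .
  qed
  have lo: "ln (fact n :: real) \<ge> real n * A - \<theta>"
  proof -
    have "(\<Sum>p\<in>P. real n * (ln (real p) / real p) - ln (real p)) \<le> ln (fact n :: real)"
      unfolding lf
    proof (rule sum_mono)
      fix p assume "p \<in> P"
      then have pr: "prime p" unfolding P_def by simp
      have p2: "real p \<ge> 2" using prime_ge_2_nat[OF pr] by simp
      have lnp: "ln (real p) \<ge> 0" using p2 by simp
      have "real n / real p - 1 \<le> real (n div p)"
      proof -
        have "n < p * (n div p) + p" using pr prime_gt_0_nat[OF pr]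
          by (metis add.commute div_mult_mod_eq mod_less_divisor mult.commute nat_add_left_cancel_less)
        then have "real n < real p * real (n div p) + real p" by (metis of_nat_add of_nat_less_iff of_nat_mult)
        then show ?thesis using p2 by (simp add: field_simps)
      qed
      also have "\<dots> \<le> real (multiplicity p (fact n :: nat))" using mult_fact_ge[OF pr, of n] by simp
      finally have "(real n / real p - 1) * ln (real p) \<le> real (multiplicity p (fact n :: nat)) * ln (real p)"
        by (rule mult_right_mono[OF _ lnp])
      then show "real n * (ln (real p) / real p) - ln (real p) \<le> real (multiplicity p (fact n :: nat)) * ln (real p)"
        by (simp add: algebra_simps)
    qed
    moreover have "(\<Sum>p\<in>P. real n * (ln (real p) / real p) - ln (real p)) = real n * A - \<theta>"
      unfolding A_def \<theta>_def by (simp add: sum_subtractf sum_distrib_left)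
    ultimately show ?thesis by simp
  qed
  have n0: "real n \<ge> 1" using n by simp
  have f1: "real n * ln (real n) - real n \<le> ln (fact n :: real)" by (rule ln_fact_lower)
  have f2: "ln (fact n :: real) \<le> real n * ln (real n)" by (rule ln_fact_upper)
  have "real n * ln 4 \<le> real n * 2" using ln4 n0 by (intro mult_left_mono) auto
  then have "real n * A \<le> real n * (ln (real n) + 2)"
    using lo f2 th by (simp add: algebra_simps)
  then have "A \<le> ln (real n) + 2" using n0 by (simp add: mult_le_cancel_left)
  then show "(\<Sum>p\<in>{p::nat. prime p \<and> p \<le> n}. ln (real p) / real p) \<le> ln (real n) + 2"
    unfolding A_def P_def .
  have "real n * E \<le> real n * 2" using E2 n0 by (intro mult_left_mono) auto
  then have "real n * A \<ge> real n * (ln (real n) - 3)"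
    using up f1 by (simp add: algebra_simps)
  then have "A \<ge> ln (real n) - 3" using n0 by (simp add: mult_le_cancel_left)
  then show "(\<Sum>p\<in>{p::nat. prime p \<and> p \<le> n}. ln (real p) / real p) \<ge> ln (real n) - 3"
    unfolding A_def P_def .
qed

definition PS :: "real \<Rightarrow> real \<Rightarrow> (nat \<Rightarrow> real) \<Rightarrow> real" where
  "PS a b f = (\<Sum>p\<in>{p::nat. prime p \<and> a < real p \<and> real p \<le> b}. f p)"

lemma PS_finite: "finite {p::nat. prime p \<and> a < real p \<and> real p \<le> b}"
proof (rule finite_subset[of _ "{..nat \<lfloor>b\<rfloor>}"])
  show "{p::nat. prime p \<and> a < real p \<and> real p \<le> b} \<subseteq> {..nat \<lfloor>b\<rfloor>}"
    using le_nat_floor by auto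
qed simp

lemma PS_split:
  assumes "a \<le> b" "b \<le> c"
  shows "PS a c f = PS a b f + PS b c f"
proof -
  have e: "{p::nat. prime p \<and> a < real p \<and> real p \<le> c} =
      {p::nat. prime p \<and> a < real p \<and> real p \<le> b} \<union> {p::nat. prime p \<and> b < real p \<and> real p \<le> c}"
    using assms by auto
  show ?thesis unfolding PS_def e
    by (rule sum.union_disjoint[OF PS_finite PS_finite]) auto
qed

lemma PS_mono:
  assumes "\<And>p. prime p \<Longrightarrow> a < real p \<Longrightarrow> real p \<le> b \<Longrightarrow> f p \<le> g p"
  shows "PS a b f \<le> PS a b g"
  unfolding PS_def by (rule sum_mono) (use assms in auto)

lemma PS_nonneg:
  assumes "\<And>p. prime p \<Longrightarrow> a < real p \<Longrightarrow> real p \<le> b \<Longrightarrow> 0 \<le> f p"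
  shows "0 \<le> PS a b f"
  unfolding PS_def by (rule sum_nonneg) (use assms in auto)

lemma PS_add: "PS a b (\<lambda>p. f p + g p) = PS a b f + PS a b g"
  unfolding PS_def by (rule sum.distrib)

lemma PS_diff: "PS a b (\<lambda>p. f p - g p) = PS a b f - PS a b g"
  unfolding PS_def by (rule sum_subtractf)

lemma PS_cmult: "PS a b (\<lambda>p. c * f p) = c * PS a b f"
  unfolding PS_def by (rule sum_distrib_left[symmetric])

lemma PS_empty: "b \<le> a \<Longrightarrow> PS a b f = 0"
proof -
  assume "b \<le> a"
  then have e: "{p::nat. prime p \<and> a < real p \<and> real p \<le> b} = {}" by auto
  show ?thesis unfolding PS_def e by simp
qed

lemma PS_cong:
  assumes "\<And>p. prime p \<Longrightarrow> a < real p \<Longrightarrow> real p \<le> b \<Longrightarrow> f p = g p"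
  shows "PS a b f = PS a b g"
  unfolding PS_def by (rule sum.cong) (use assms in auto)

lemma mertens_real:
  assumes t: "1 \<le> t"
  shows "\<bar>PS 0 t (\<lambda>p. ln (real p) / real p) - ln t\<bar> \<le> 4"
proof -
  define n where "n = nat \<lfloor>t\<rfloor>"
  have n1: "n \<ge> 1" unfolding n_def using t by linarith
  have nt: "real n \<le> t" "t < real n + 1" unfolding n_def using t by linarith+
  have e: "{p::nat. prime p \<and> 0 < real p \<and> real p \<le> t} = {p. prime p \<and> p \<le> n}"
  proof -
    have "(prime p \<and> 0 < real p \<and> real p \<le> t) \<longleftrightarrow> (prime p \<and> p \<le> n)" for p :: nat
      using nt prime_gt_0_nat[of p] unfolding n_def by linarith
    then show ?thesis by blast
  qed
  have A: "PS 0 t (\<lambda>p. ln (real p) / real p) = (\<Sum>p\<in>{p::nat. prime p \<and> p \<le> n}. ln (real p) / real p)"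
    unfolding PS_def e ..
  have n0: "real n > 0" using n1 by simp
  have l1: "ln (real n) \<le> ln t" using nt n0 by simp
  have n1': "real n \<ge> 1" using n1 by simp
  have t2: "t \<le> 2 * real n" using nt n1' by linarith
  have "ln t \<le> ln (2 * real n)" using t2 n1' t by (subst ln_le_cancel_iff) auto
  also have "\<dots> = ln 2 + ln (real n)" using n0 by (simp add: ln_mult)
  finally have l2: "ln t \<le> 1 + ln (real n)" using ln2_le1 by simp
  show ?thesis using mertens_nat[OF n1] l1 l2 unfolding A by linarith
qed

lemma mertens_diff:
  assumes "1 \<le> a" "a \<le> b"
  shows "PS a b (\<lambda>p. ln (real p) / real p) \<le> ln b - ln a + 8"
    and "PS a b (\<lambda>p. ln (real p) / real p) \<ge> ln b - ln a - 8"
proof -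
  have "PS 0 b (\<lambda>p. ln (real p) / real p) = PS 0 a (\<lambda>p. ln (real p) / real p) + PS a b (\<lambda>p. ln (real p) / real p)"
    by (rule PS_split) (use assms in auto)
  moreover have "\<bar>PS 0 b (\<lambda>p. ln (real p) / real p) - ln b\<bar> \<le> 4" by (rule mertens_real) (use assms in auto)
  moreover have "\<bar>PS 0 a (\<lambda>p. ln (real p) / real p) - ln a\<bar> \<le> 4" by (rule mertens_real) (use assms in auto)
  ultimately show "PS a b (\<lambda>p. ln (real p) / real p) \<le> ln b - ln a + 8"
    and "PS a b (\<lambda>p. ln (real p) / real p) \<ge> ln b - ln a - 8" by linarith+
qed

lemma recip_upper:
  assumes a: "1 < a" and ab: "a \<le> b"
  shows "PS a b (\<lambda>p. 1 / real p) \<le> (ln b - ln a + 8) / ln a"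
proof -
  have la: "ln a > 0" using a by simp
  have "PS a b (\<lambda>p. 1 / real p) \<le> PS a b (\<lambda>p. (1 / ln a) * (ln (real p) / real p))"
  proof (rule PS_mono)
    fix p assume p: "prime p" "a < real p" "real p \<le> b"
    have "ln a \<le> ln (real p)" using p a by simp
    then have "1 \<le> ln (real p) / ln a" using la by simp
    then have "1 * (1 / real p) \<le> (ln (real p) / ln a) * (1 / real p)"
      by (rule mult_right_mono) simp
    then show "1 / real p \<le> (1 / ln a) * (ln (real p) / real p)" by simp
  qed
  also have "\<dots> = (1 / ln a) * PS a b (\<lambda>p. ln (real p) / real p)" by (rule PS_cmult)
  also have "\<dots> \<le> (1 / ln a) * (ln b - ln a + 8)"
    using mertens_diff(1)[of a b] a ab la by (intro mult_left_mono) auto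
  finally show ?thesis by simp
qed

lemma recip_lower:
  assumes a: "1 < a" and ab: "a \<le> b"
  shows "PS a b (\<lambda>p. 1 / real p) \<ge> (ln b - ln a - 8) / ln b"
proof -
  have lb: "ln b > 0" using a ab by simp
  have "(1 / ln b) * (ln b - ln a - 8) \<le> (1 / ln b) * PS a b (\<lambda>p. ln (real p) / real p)"
    using mertens_diff(2)[of a b] a ab lb by (intro mult_left_mono) auto
  also have "\<dots> = PS a b (\<lambda>p. (1 / ln b) * (ln (real p) / real p))" by (rule PS_cmult[symmetric])
  also have "\<dots> \<le> PS a b (\<lambda>p. 1 / real p)"
  proof (rule PS_mono)
    fix p assume p: "prime p" "a < real p" "real p \<le> b"
    have pp: "real p > 0" using p a by simp
    have "ln (real p) \<le> ln b" using p pp by simp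
    then have "ln (real p) / ln b \<le> 1" using lb by simp
    then have "(ln (real p) / ln b) * (1 / real p) \<le> 1 * (1 / real p)"
      by (rule mult_right_mono) simp
    then show "(1 / ln b) * (ln (real p) / real p) \<le> 1 / real p" by simp
  qed
  finally show ?thesis by simp
qed

definition smooth :: "real \<Rightarrow> nat \<Rightarrow> bool" where
  "smooth y n \<longleftrightarrow> (\<forall>p. prime p \<and> p dvd n \<longrightarrow> real p \<le> y)"

definition Psi :: "real \<Rightarrow> real \<Rightarrow> nat" where
  "Psi x y = card {n::nat. 1 \<le> n \<and> real n \<le> x \<and> smooth y n}"

lemma upto_iff: "(1 \<le> n \<and> real n \<le> x) \<longleftrightarrow> n \<in> {1..nat \<lfloor>x\<rfloor>}"
  by (metis atLeastAtMost_iff le_nat_floor nat_floor_neg nle_le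
    not_one_le_zero of_nat_floor of_nat_le_iff order_trans)

lemma upto_set_eq: "{n::nat. 1 \<le> n \<and> real n \<le> x} = {1..nat \<lfloor>x\<rfloor>}"
  using upto_iff by blast

lemma card_upto: "card {n::nat. 1 \<le> n \<and> real n \<le> x} = nat \<lfloor>x\<rfloor>"
  unfolding upto_set_eq by simp

lemma finite_upto: "finite {n::nat. 1 \<le> n \<and> real n \<le> x \<and> P n}"
  by (rule finite_subset[of _ "{1..nat \<lfloor>x\<rfloor>}"]) (use upto_set_eq in blast, simp)

lemma Psi_le_floor: "Psi x y \<le> nat \<lfloor>x\<rfloor>"
proof -
  have "Psi x y \<le> card {n::nat. 1 \<le> n \<and> real n \<le> x}"
    unfolding Psi_def by (rule card_mono) (use finite_upto[of x "\<lambda>_. True"] in auto)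
  then show ?thesis using card_upto by simp
qed

lemma Psi_le: "x \<ge> 0 \<Longrightarrow> real (Psi x y) \<le> x"
proof -
  assume x: "x \<ge> 0"
  have "real (Psi x y) \<le> real (nat \<lfloor>x\<rfloor>)" using Psi_le_floor[of x y] by simp
  also have "\<dots> \<le> x" using x by (simp add: of_nat_floor)
  finally show ?thesis .
qed

lemma Psi_mono:
  assumes "y \<le> y'"
  shows "Psi x y \<le> Psi x y'"
  unfolding Psi_def
  by (rule card_mono[OF finite_upto]) (use assms in \<open>auto simp: smooth_def\<close>)

lemma Psi_big:
  assumes "x \<le> y"
  shows "Psi x y = nat \<lfloor>x\<rfloor>"
proof -
  have "smooth y n" if "1 \<le> n" "real n \<le> x" for n
    unfolding smooth_def
  proof (intro allI impI)
    fix p assume "prime p \<and> p dvd n"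
    then have "p \<le> n" using that by (intro dvd_imp_le) auto
    then show "real p \<le> y" using that assms by linarith
  qed
  then have "{n::nat. 1 \<le> n \<and> real n \<le> x \<and> smooth y n} = {n::nat. 1 \<le> n \<and> real n \<le> x}" by blast
  then show ?thesis unfolding Psi_def using card_upto by simp
qed

lemma max_prime_factor:
  fixes n :: nat
  assumes n: "n \<ge> 1" and q: "prime q" "q dvd n"
  obtains p where "prime p" "p dvd n" "q \<le> p" "\<And>r. prime r \<Longrightarrow> r dvd n \<Longrightarrow> r \<le> p"
proof -
  define p where "p = Max (prime_factors n)"
  have n0: "n \<noteq> 0" using n by simp
  have fin: "finite (prime_factors n)" by simp
  have qin: "q \<in> prime_factors n" using q n0 by (simp add: in_prime_factors_iff)
  then have ne: "prime_factors n \<noteq> {}" by blast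
  have pin: "p \<in> prime_factors n" unfolding p_def using Max_in[OF fin ne] .
  have "\<And>r. prime r \<Longrightarrow> r dvd n \<Longrightarrow> r \<le> p"
    unfolding p_def using n0 fin by (intro Max_ge) (auto simp: in_prime_factors_iff)
  moreover have "q \<le> p" unfolding p_def using qin fin by (intro Max_ge)
  moreover have "prime p" "p dvd n" using pin by (auto simp: in_prime_factors_iff)
  ultimately show ?thesis using that by blast
qed

lemma buchstab:
  assumes x: "x \<ge> 0"
  shows "real (nat \<lfloor>x\<rfloor>) = real (Psi x y) + PS y x (\<lambda>p. real (Psi (x / real p) (real p)))"
proof -
  define N where "N = {n::nat. 1 \<le> n \<and> real n \<le> x}"
  define S where "S = {n::nat. 1 \<le> n \<and> real n \<le> x \<and> smooth y n}"
  define NS where "NS = {n::nat. 1 \<le> n \<and> real n \<le> x \<and> \<not> smooth y n}"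
  define P where "P = {p::nat. prime p \<and> y < real p \<and> real p \<le> x}"
  define M where "M = (\<lambda>p::nat. {m::nat. 1 \<le> m \<and> real m \<le> x / real p \<and> smooth (real p) m})"
  have finN: "finite N" unfolding N_def using finite_upto[of x "\<lambda>_. True"] by simp
  have finS: "finite S" unfolding S_def by (rule finite_upto)
  have finNS: "finite NS" unfolding NS_def by (rule finite_upto)
  have finP: "finite P" unfolding P_def by (rule PS_finite)
  have finM: "finite (M p)" for p unfolding M_def by (rule finite_upto)
  have cardN: "card N = nat \<lfloor>x\<rfloor>" unfolding N_def by (rule card_upto)
  have NSS: "N = S \<union> NS" "S \<inter> NS = {}" unfolding N_def S_def NS_def by auto
  have c1: "card N = card S + card NS"
    unfolding NSS(1) by (rule card_Un_disjoint[OF finS finNS NSS(2)])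
  have NSU: "NS = (\<Union>p\<in>P. (\<lambda>m. p * m) ` M p)"
  proof
    show "NS \<subseteq> (\<Union>p\<in>P. (\<lambda>m. p * m) ` M p)"
    proof
      fix n assume "n \<in> NS"
      then have n1: "1 \<le> n" and nx: "real n \<le> x" and ns: "\<not> smooth y n" unfolding NS_def by auto
      from ns obtain q where q: "prime q" "q dvd n" "\<not> real q \<le> y" unfolding smooth_def by auto
      obtain p where p: "prime p" "p dvd n" "q \<le> p" and pmax: "\<And>r. prime r \<Longrightarrow> r dvd n \<Longrightarrow> r \<le> p"
        using max_prime_factor[OF n1 q(1,2)] by blast
      have p0: "p > 0" using p(1) prime_gt_0_nat by simp
      define m where "m = n div p"
      have nm: "n = p * m" unfolding m_def using p(2) by simp
      have m1: "1 \<le> m" using nm n1 by (cases m) auto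
      have pn: "p \<le> n" using p(2) n1 by (intro dvd_imp_le) auto
      have "real p * real m \<le> x" using nx nm by (metis of_nat_mult)
      then have mx: "real m \<le> x / real p" using p0 by (simp add: field_simps)
      have sm: "smooth (real p) m" unfolding smooth_def
      proof (intro allI impI)
        fix r assume r: "prime r \<and> r dvd m"
        then have "r dvd n" using nm by simp
        then show "real r \<le> real p" using pmax r by simp
      qed
      have "p \<in> P" unfolding P_def using p q pn nx by auto
      moreover have "m \<in> M p" unfolding M_def using m1 mx sm by simp
      ultimately show "n \<in> (\<Union>p\<in>P. (\<lambda>m. p * m) ` M p)" using nm by blast
    qed
  next
    show "(\<Union>p\<in>P. (\<lambda>m. p * m) ` M p) \<subseteq> NS"
    proof
      fix n assume "n \<in> (\<Union>p\<in>P. (\<lambda>m. p * m) ` M p)"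
      then obtain p m where p: "p \<in> P" and m: "m \<in> M p" and nm: "n = p * m" by blast
      have pp: "prime p" "y < real p" "real p \<le> x" using p unfolding P_def by auto
      have p0: "real p > 0" using pp(1) prime_gt_0_nat by simp
      have m1: "1 \<le> m" and mx: "real m \<le> x / real p" using m unfolding M_def by auto
      have "1 \<le> n" using nm m1 pp(1) prime_gt_0_nat[of p] by simp
      moreover have "real n \<le> x" using mx p0 nm by (simp add: field_simps)
      moreover have "\<not> smooth y n" unfolding smooth_def using pp nm by auto
      ultimately show "n \<in> NS" unfolding NS_def by simp
    qed
  qed
  have disj: "((\<lambda>m. p * m) ` M p) \<inter> ((\<lambda>m. p' * m) ` M p') = {}"
    if "p \<in> P" "p' \<in> P" "p \<noteq> p'" for p p'
  proof (rule ccontr)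
    assume "((\<lambda>m. p * m) ` M p) \<inter> ((\<lambda>m. p' * m) ` M p') \<noteq> {}"
    then obtain m m' where m: "m \<in> M p" and m': "m' \<in> M p'" and eq: "p * m = p' * m'" by blast
    have pp: "prime p" "prime p'" using that unfolding P_def by auto
    have le: "p' \<le> p" if "prime p" "prime p'" "p \<noteq> p'" "m \<in> M p" "p * m = p' * m'" for p p' m m'
    proof -
      have "p' dvd p * m" using that(5) by simp
      then have "p' dvd p \<or> p' dvd m" using prime_dvd_mult_iff[OF that(2)] by blast
      moreover have "\<not> p' dvd p" using that(1-3) primes_dvd_imp_eq by blast
      ultimately have "p' dvd m" by blast
      then show "p' \<le> p" using that(2,4) unfolding M_def smooth_def by auto
    qed
    have "p' \<le> p" by (rule le[OF pp(1) pp(2) that(3) m eq])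
    moreover have "p \<le> p'" by (rule le[OF pp(2) pp(1) _ m', of m]) (use that(3) eq in auto)
    ultimately show False using that(3) by simp
  qed
  have "card NS = (\<Sum>p\<in>P. card ((\<lambda>m. p * m) ` M p))"
    unfolding NSU by (rule card_UN_disjoint[OF finP]) (use finM disj in auto)
  also have "\<dots> = (\<Sum>p\<in>P. card (M p))"
  proof (rule sum.cong[OF refl])
    fix p assume "p \<in> P"
    then have "p > 0" unfolding P_def using prime_gt_0_nat by auto
    then have "inj_on (\<lambda>m. p * m) (M p)" by (intro inj_onI) simp
    then show "card ((\<lambda>m. p * m) ` M p) = card (M p)" by (rule card_image)
  qed
  finally have cNS: "card NS = (\<Sum>p\<in>P. Psi (x / real p) (real p))"
    unfolding M_def Psi_def by simp
  have "real (nat \<lfloor>x\<rfloor>) = real (card S) + real (card NS)" using c1 cardN by simp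
  also have "real (card S) = real (Psi x y)" unfolding S_def Psi_def ..
  also have "real (card NS) = PS y x (\<lambda>p. real (Psi (x / real p) (real p)))"
    unfolding cNS PS_def P_def by simp
  finally show ?thesis .
qed

abbreviation R where "R \<equiv> dickman_rho"

lemma R_one: "0 \<le> u \<Longrightarrow> u \<le> 1 \<Longrightarrow> R u = 1"
  using is_dickman_rho unfolding is_dickman_def by blast

lemma R_cont: "continuous_on {0..} R"
  using is_dickman_rho unfolding is_dickman_def by blast

lemma R_deriv: "u > 1 \<Longrightarrow> (R has_real_derivative (- (R (u - 1) / u))) (at u)"
  by (rule dickman_deriv[OF is_dickman_rho])

definition Sasym :: "real \<Rightarrow> bool" where
  "Sasym u \<longleftrightarrow> (\<forall>\<epsilon>>0. \<exists>X. \<forall>x\<ge>X. \<bar>real (Psi x (x powr (1 / u))) - R u * x\<bar> \<le> \<epsilon> * x)"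

definition Uasym :: "real \<Rightarrow> bool" where
  "Uasym V \<longleftrightarrow> (\<forall>\<epsilon>>0. \<exists>X\<ge>1. \<forall>z\<ge>X. \<forall>w>1. ln z \<le> V * ln w \<longrightarrow>
      \<bar>real (Psi z w) - R (ln z / ln w) * z\<bar> \<le> \<epsilon> * z)"

lemma floor_close: "x \<ge> 0 \<Longrightarrow> \<bar>real (nat \<lfloor>x\<rfloor>) - x\<bar> \<le> 1"
  by (simp add: of_nat_floor) linarith

lemma Sasym_small:
  assumes u: "0 < u" "u \<le> 1"
  shows "Sasym u"
  unfolding Sasym_def
proof (intro allI impI)
  fix \<epsilon> :: real assume e: "\<epsilon> > 0"
  show "\<exists>X. \<forall>x\<ge>X. \<bar>real (Psi x (x powr (1 / u))) - R u * x\<bar> \<le> \<epsilon> * x"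
  proof (intro exI[of _ "max 1 (1 / \<epsilon>)"] allI impI)
    fix x assume x: "max 1 (1 / \<epsilon>) \<le> x"
    have x1: "x \<ge> 1" using x by simp
    have "x = x powr 1" using x1 by simp
    also have "\<dots> \<le> x powr (1 / u)" using x1 u by (intro powr_mono) auto
    finally have "Psi x (x powr (1 / u)) = nat \<lfloor>x\<rfloor>" by (rule Psi_big)
    moreover have "R u = 1" using u by (intro R_one) auto
    moreover have "1 \<le> \<epsilon> * x" using x e by (simp add: field_simps)
    ultimately show "\<bar>real (Psi x (x powr (1 / u))) - R u * x\<bar> \<le> \<epsilon> * x"
      using floor_close[of x] x1 by simp
  qed
qed

lemma Uasym_one: "Uasym 1"
  unfolding Uasym_def
proof (intro allI impI)
  fix \<epsilon> :: real assume e: "\<epsilon> > 0"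
  show "\<exists>X\<ge>1. \<forall>z\<ge>X. \<forall>w>1. ln z \<le> 1 * ln w \<longrightarrow> \<bar>real (Psi z w) - R (ln z / ln w) * z\<bar> \<le> \<epsilon> * z"
  proof (intro exI[of _ "max 1 (1 / \<epsilon>)"] conjI allI impI)
    fix z w assume z: "max 1 (1 / \<epsilon>) \<le> z" and w: "w > 1" and zw: "ln z \<le> 1 * ln w"
    have z1: "z \<ge> 1" using z by simp
    have "z \<le> w" using zw z1 w by simp
    then have "Psi z w = nat \<lfloor>z\<rfloor>" by (rule Psi_big)
    moreover have "R (ln z / ln w) = 1" using zw z1 w by (intro R_one) (auto simp: divide_le_eq)
    moreover have "1 \<le> \<epsilon> * z" using z e by (simp add: field_simps)
    ultimately show "\<bar>real (Psi z w) - R (ln z / ln w) * z\<bar> \<le> \<epsilon> * z"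
      using floor_close[of z] z1 by simp
  qed simp
qed

lemma R_antimono:
  assumes nn: "\<And>v. 0 \<le> v \<Longrightarrow> v \<le> V \<Longrightarrow> R v \<ge> 0"
  assumes ab: "0 \<le> a" "a \<le> b" "b \<le> V + 1"
  shows "R b \<le> R a"
proof (cases "b \<le> 1")
  case True
  then show ?thesis using ab R_one by simp
next
  case False
  define a' where "a' = max a 1"
  have Ra: "R a' = R a"
    by (cases "a \<le> 1") (use ab R_one in \<open>auto simp: a'_def\<close>)
  have "R b \<le> R a'"
  proof (cases "a' = b")
    case True then show ?thesis by simp
  next
    case False
    then have lt: "a' < b" using ab \<open>\<not> b \<le> 1\<close> by (auto simp: a'_def)
    have cont: "continuous_on {a'..b} R"
      by (rule continuous_on_subset[OF R_cont]) (auto simp: a'_def)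
    obtain l z where z: "a' < z" "z < b" "(R has_real_derivative l) (at z)" "R b - R a' = (b - a') * l"
      using MVT[OF lt cont] R_deriv a'_def real_differentiable_def by (metis max.strict_boundedE less_trans)
    have z1: "z > 1" using z(1) by (simp add: a'_def)
    have "l = - (R (z - 1) / z)" using DERIV_unique[OF z(3) R_deriv[OF z1]] .
    moreover have "R (z - 1) \<ge> 0" using z z1 ab by (intro nn) auto
    ultimately have "l \<le> 0" using z1 by simp
    then show ?thesis using z(4) lt by (smt (verit) mult_nonneg_nonpos)
  qed
  then show ?thesis using Ra by simp
qed

lemma Sasym_nonneg:
  assumes "Sasym u"
  shows "R u \<ge> 0"
proof (rule ccontr)
  assume neg: "\<not> R u \<ge> 0"
  define \<epsilon> where "\<epsilon> = - R u / 2"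
  have e: "\<epsilon> > 0" using neg by (simp add: \<epsilon>_def)
  obtain X where X: "\<forall>x\<ge>X. \<bar>real (Psi x (x powr (1 / u))) - R u * x\<bar> \<le> \<epsilon> * x"
    using assms e unfolding Sasym_def by blast
  define x where "x = max X 1"
  have x1: "x \<ge> 1" unfolding x_def by simp
  have "\<bar>real (Psi x (x powr (1 / u))) - R u * x\<bar> \<le> \<epsilon> * x" using X by (simp add: x_def)
  then have "real (Psi x (x powr (1 / u))) \<le> (R u + \<epsilon>) * x" by (simp add: algebra_simps abs_le_iff)
  moreover have "(R u + \<epsilon>) * x < 0" using neg x1 by (intro mult_neg_pos) (auto simp: \<epsilon>_def)
  ultimately show False by simp
qed

lemma riemann:
  fixes u h :: real and K :: nat
  assumes u: "u > 1" and K: "K > 0" and hdef: "h = (u - 1) / real K"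
    and anti: "\<And>a b. 0 \<le> a \<Longrightarrow> a \<le> b \<Longrightarrow> b \<le> u - 1 \<Longrightarrow> R b \<le> R a"
    and nn: "\<And>v. 0 \<le> v \<Longrightarrow> v \<le> u - 1 \<Longrightarrow> R v \<ge> 0"
  shows "(\<Sum>j<K. R ((1 + real (Suc j) * h) - 1) * h / (1 + real (Suc j) * h)) \<ge> 1 - R u - h"
    and "(\<Sum>j<K. R ((1 + real j * h) - 1) * h / (1 + real j * h)) \<le> 1 - R u + h"
proof -
  define t where "t = (\<lambda>j::nat. 1 + real j * h)"
  define g where "g = (\<lambda>s. R (s - 1) / s)"
  have h0: "h > 0" using u K by (simp add: hdef)
  have tK: "t K = u" using K by (simp add: t_def hdef)
  have t0: "t 0 = 1" by (simp add: t_def)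
  have tmono: "t j \<le> t j'" if "j \<le> j'" for j j' using that h0 by (simp add: t_def mult_right_mono)
  have t1: "t j \<ge> 1" for j using h0 by (simp add: t_def)
  have tle: "t j \<le> u" if "j \<le> K" for j using tmono[OF that] tK by simp
  have tsuc: "t (Suc j) = t j + h" for j by (simp add: t_def algebra_simps)
  have ganti: "g s' \<le> g s" if "1 \<le> s" "s \<le> s'" "s' \<le> u" for s s'
  proof -
    have "R (s' - 1) \<le> R (s - 1)" using that by (intro anti) auto
    moreover have "R (s' - 1) \<ge> 0" using that by (intro nn) auto
    ultimately have "R (s' - 1) / s' \<le> R (s - 1) / s'" using that by (intro divide_right_mono) auto
    also have "\<dots> \<le> R (s - 1) / s" using that nn[of "s - 1"] by (intro divide_left_mono) auto
    finally show ?thesis by (simp add: g_def)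
  qed
  have gnn: "g s \<ge> 0" if "1 \<le> s" "s \<le> u" for s using that nn[of "s - 1"] by (simp add: g_def)
  have g1: "g 1 = 1" by (simp add: g_def R_one)
  have stepb: "h * g (t (Suc j)) \<le> R (t j) - R (t (Suc j)) \<and> R (t j) - R (t (Suc j)) \<le> h * g (t j)"
    if j: "j < K" for j
  proof -
    have lt: "t j < t (Suc j)" using h0 tsuc by simp
    have cont: "continuous_on {t j..t (Suc j)} R"
      by (rule continuous_on_subset[OF R_cont]) (use t1 in \<open>auto intro: order_trans[of 0 1]\<close>)
    have dif: "R differentiable (at z)" if "t j < z" "z < t (Suc j)" for z
      using R_deriv[of z] t1[of j] that real_differentiable_def by force
    obtain l z where z: "t j < z" "z < t (Suc j)" "(R has_real_derivative l) (at z)"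
        "R (t (Suc j)) - R (t j) = (t (Suc j) - t j) * l"
      using MVT[OF lt cont dif] by blast
    have z1: "z > 1" using z(1) t1[of j] by simp
    have l: "l = - g z" using DERIV_unique[OF z(3) R_deriv[OF z1]] by (simp add: g_def)
    have zu: "z \<le> u" using z(2) tle[of "Suc j"] j by simp
    have "g (t (Suc j)) \<le> g z" using z zu z1 tle[of "Suc j"] j by (intro ganti) auto
    moreover have "g z \<le> g (t j)" using z zu z1 t1[of j] by (intro ganti) auto
    moreover have "R (t j) - R (t (Suc j)) = h * g z" using z(4) l tsuc by simp
    ultimately show ?thesis using h0 by (simp add: mult_left_mono)
  qed
  have tel1: "(\<Sum>j<K. R (t j) - R (t (Suc j))) = 1 - R u"
    using sum_lessThan_telescope'[of "\<lambda>j. R (t j)" K] tK t0 R_one[of 1] by simp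
  have tel2: "(\<Sum>j<K. h * g (t j) - h * g (t (Suc j))) = h * (1 - g u)"
    using sum_lessThan_telescope'[of "\<lambda>j. h * g (t j)" K] tK t0 g1 by (simp add: algebra_simps)
  have gu: "g u \<ge> 0" using gnn[of u] u by simp
  have s1: "(\<Sum>j<K. h * g (t (Suc j))) \<le> 1 - R u"
    unfolding tel1[symmetric] by (rule sum_mono) (use stepb in blast)
  have s2: "(\<Sum>j<K. h * g (t j)) \<ge> 1 - R u"
    unfolding tel1[symmetric] by (rule sum_mono) (use stepb in blast)
  have s3: "(\<Sum>j<K. h * g (t j)) - (\<Sum>j<K. h * g (t (Suc j))) = h * (1 - g u)"
    using tel2 by (simp add: sum_subtractf)
  have "h * (1 - g u) \<le> h" using h0 gu by (simp add: algebra_simps)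
  then have A: "(\<Sum>j<K. h * g (t (Suc j))) \<ge> 1 - R u - h"
    and B: "(\<Sum>j<K. h * g (t j)) \<le> 1 - R u + h" using s1 s2 s3 by linarith+
  show "(\<Sum>j<K. R ((1 + real (Suc j) * h) - 1) * h / (1 + real (Suc j) * h)) \<ge> 1 - R u - h"
    using A by (simp add: t_def g_def mult.commute)
  show "(\<Sum>j<K. R ((1 + real j * h) - 1) * h / (1 + real j * h)) \<le> 1 - R u + h"
    using B by (simp add: t_def g_def mult.commute)
qed

lemma PS_telescope:
  assumes "\<And>j. j < K \<Longrightarrow> e (Suc j) \<le> e j"
  shows "(\<Sum>j<K. PS (e (Suc j)) (e j) f) = PS (e K) (e 0) f \<and> e K \<le> e 0"
  using assms
proof (induction K)
  case 0
  then show ?case by (simp add: PS_empty)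
next
  case (Suc K)
  have IH: "(\<Sum>j<K. PS (e (Suc j)) (e j) f) = PS (e K) (e 0) f" "e K \<le> e 0" using Suc by auto
  have le: "e (Suc K) \<le> e K" using Suc by simp
  have "(\<Sum>j<Suc K. PS (e (Suc j)) (e j) f) = PS (e K) (e 0) f + PS (e (Suc K)) (e K) f"
    using IH by simp
  also have "\<dots> = PS (e (Suc K)) (e 0) f" using PS_split[OF le IH(2)] by simp
  finally show ?case using le IH by simp
qed

lemma block_recip:
  assumes x: "x > 1" and s: "1 \<le> s" "s < s'" "s' \<le> u"
  shows "PS (x powr (1 / s')) (x powr (1 / s)) (\<lambda>p. 1 / real p) \<le> (s' - s) / s + 8 * u / ln x"
    and "PS (x powr (1 / s')) (x powr (1 / s)) (\<lambda>p. 1 / real p) \<ge> (s' - s) / s' - 8 * u / ln x"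
proof -
  define L where "L = ln x"
  have L: "L > 0" using x by (simp add: L_def)
  have a1: "x powr (1 / s') > 1" using x s powr_less_mono[of 0 "1 / s'" x] by simp
  have ab: "x powr (1 / s') \<le> x powr (1 / s)" using x s by (simp add: frac_le)
  have la: "ln (x powr (1 / s')) = L / s'" and lb: "ln (x powr (1 / s)) = L / s" using x by (simp_all add: L_def ln_powr)
  have s0: "s > 0" "s' > 0" using s by auto
  have "PS (x powr (1 / s')) (x powr (1 / s)) (\<lambda>p. 1 / real p) \<le> (L / s - L / s' + 8) / (L / s')"
    using recip_upper[OF a1 ab] unfolding la lb .
  also have "\<dots> = (s' - s) / s + 8 * s' / L" using L s0 by (simp add: field_simps)
  also have "\<dots> \<le> (s' - s) / s + 8 * u / L" using L s by (simp add: divide_right_mono)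
  finally show "PS (x powr (1 / s')) (x powr (1 / s)) (\<lambda>p. 1 / real p) \<le> (s' - s) / s + 8 * u / ln x"
    by (simp add: L_def)
  have "(L / s - L / s' - 8) / (L / s) \<le> PS (x powr (1 / s')) (x powr (1 / s)) (\<lambda>p. 1 / real p)"
    using recip_lower[OF a1 ab] unfolding la lb .
  moreover have "(L / s - L / s' - 8) / (L / s) = (s' - s) / s' - 8 * s / L" using L s0 by (simp add: field_simps)
  moreover have "8 * s / L \<le> 8 * u / L" using L s by (simp add: divide_right_mono)
  ultimately show "PS (x powr (1 / s')) (x powr (1 / s)) (\<lambda>p. 1 / real p) \<ge> (s' - s) / s' - 8 * u / ln x"
    by (simp add: L_def)
qed

lemma blocks_setup:
  fixes x u h :: real and K :: nat
  assumes x: "x > 1" and u: "u > 1" and K: "K > 0" and hdef: "h = (u - 1) / real K"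
  defines "e \<equiv> (\<lambda>j::nat. x powr (1 / (1 + real j * h)))"
  shows "e 0 = x" "e K = x powr (1 / u)" "\<And>j. e (Suc j) \<le> e j"
    "\<And>f. (\<Sum>j<K. PS (e (Suc j)) (e j) f) = PS (x powr (1 / u)) x f"
    "\<And>j. j < K \<Longrightarrow> 1 \<le> 1 + real j * h \<and> 1 + real j * h < 1 + real (Suc j) * h \<and> 1 + real (Suc j) * h \<le> u"
    "\<And>j. (1 + real (Suc j) * h) - (1 + real j * h) = h"
    "h > 0"
proof -
  have h0: "h > 0" using u K by (simp add: hdef)
  show "h > 0" by (rule h0)
  show e0: "e 0 = x" using x by (simp add: e_def)
  have "1 + real K * h = u" using K by (simp add: hdef)
  then show eK: "e K = x powr (1 / u)" by (simp add: e_def)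
  show em: "e (Suc j) \<le> e j" for j
  proof -
    have p1: "0 < 1 + real j * h" using h0 by (simp add: add_pos_nonneg)
    have p2: "1 + real j * h \<le> 1 + real (Suc j) * h" using h0 by (simp add: algebra_simps)
    have "1 / (1 + real (Suc j) * h) \<le> 1 / (1 + real j * h)"
      using p1 p2 by (intro divide_left_mono) auto
    then show ?thesis unfolding e_def using x by (intro powr_mono) auto
  qed
  show "(\<Sum>j<K. PS (e (Suc j)) (e j) f) = PS (x powr (1 / u)) x f" for f
    using PS_telescope[of K e f] em e0 eK by simp
  show "(1 + real (Suc j) * h) - (1 + real j * h) = h" for j by (simp add: algebra_simps)
  show "1 \<le> 1 + real j * h \<and> 1 + real j * h < 1 + real (Suc j) * h \<and> 1 + real (Suc j) * h \<le> u"
    if "j < K" for j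
  proof -
    have "real (Suc j) * h \<le> real K * h" using that h0 by (intro mult_right_mono) auto
    moreover have "real K * h = u - 1" using K by (simp add: hdef)
    ultimately show ?thesis using h0 by (auto simp: algebra_simps)
  qed
qed

lemma blocks_upper:
  fixes x u h :: real and K :: nat and c F G :: "nat \<Rightarrow> real"
  assumes x: "x > 1" and u: "u > 1" and K: "K > 0" and hdef: "h = (u - 1) / real K"
    and c: "\<And>j. j < K \<Longrightarrow> c j \<ge> 0"
    and F: "\<And>j p. j < K \<Longrightarrow> prime p \<Longrightarrow> x powr (1 / (1 + real (Suc j) * h)) < real p \<Longrightarrow>
             real p \<le> x powr (1 / (1 + real j * h)) \<Longrightarrow> F p \<le> c j * (1 / real p) + G p"
  shows "PS (x powr (1 / u)) x F \<le> (\<Sum>j<K. c j * (h / (1 + real j * h) + 8 * u / ln x)) + PS (x powr (1 / u)) x G"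
proof -
  define e where "e = (\<lambda>j::nat. x powr (1 / (1 + real j * h)))"
  note S = blocks_setup[OF x u K hdef, folded e_def]
  have "PS (x powr (1 / u)) x F = (\<Sum>j<K. PS (e (Suc j)) (e j) F)" using S(4)[of F] unfolding e_def by simp
  also have "\<dots> \<le> (\<Sum>j<K. c j * (h / (1 + real j * h) + 8 * u / ln x) + PS (e (Suc j)) (e j) G)"
  proof (rule sum_mono)
    fix j assume j: "j \<in> {..<K}"
    have "PS (e (Suc j)) (e j) F \<le> PS (e (Suc j)) (e j) (\<lambda>p. c j * (1 / real p) + G p)"
      by (rule PS_mono) (use F j in \<open>auto simp: e_def\<close>)
    also have "\<dots> = c j * PS (e (Suc j)) (e j) (\<lambda>p. 1 / real p) + PS (e (Suc j)) (e j) G"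
      by (simp only: PS_add PS_cmult)
    also have "\<dots> \<le> c j * (h / (1 + real j * h) + 8 * u / ln x) + PS (e (Suc j)) (e j) G"
    proof -
      have b: "1 \<le> 1 + real j * h \<and> 1 + real j * h < 1 + real (Suc j) * h \<and> 1 + real (Suc j) * h \<le> u"
        using S(5) j by simp
      have "PS (e (Suc j)) (e j) (\<lambda>p. 1 / real p) \<le> ((1 + real (Suc j) * h) - (1 + real j * h)) / (1 + real j * h) + 8 * u / ln x"
        unfolding e_def using block_recip(1)[OF x] b by blast
      then have "PS (e (Suc j)) (e j) (\<lambda>p. 1 / real p) \<le> h / (1 + real j * h) + 8 * u / ln x"
        using S(6) by simp
      then show ?thesis using c j by (simp add: mult_left_mono)
    qed
    finally show "PS (e (Suc j)) (e j) F \<le> c j * (h / (1 + real j * h) + 8 * u / ln x) + PS (e (Suc j)) (e j) G" .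
  qed
  also have "\<dots> = (\<Sum>j<K. c j * (h / (1 + real j * h) + 8 * u / ln x)) + PS (x powr (1 / u)) x G"
    using S(4)[of G] unfolding e_def by (simp add: sum.distrib)
  finally show ?thesis .
qed

lemma blocks_lower:
  fixes x u h :: real and K :: nat and c F G :: "nat \<Rightarrow> real"
  assumes x: "x > 1" and u: "u > 1" and K: "K > 0" and hdef: "h = (u - 1) / real K"
    and c: "\<And>j. j < K \<Longrightarrow> c j \<ge> 0"
    and F: "\<And>j p. j < K \<Longrightarrow> prime p \<Longrightarrow> x powr (1 / (1 + real (Suc j) * h)) < real p \<Longrightarrow>
             real p \<le> x powr (1 / (1 + real j * h)) \<Longrightarrow> F p \<ge> c j * (1 / real p) - G p"
  shows "PS (x powr (1 / u)) x F \<ge> (\<Sum>j<K. c j * (h / (1 + real (Suc j) * h) - 8 * u / ln x)) - PS (x powr (1 / u)) x G"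
proof -
  define e where "e = (\<lambda>j::nat. x powr (1 / (1 + real j * h)))"
  note S = blocks_setup[OF x u K hdef, folded e_def]
  have "(\<Sum>j<K. c j * (h / (1 + real (Suc j) * h) - 8 * u / ln x)) - PS (x powr (1 / u)) x G
      = (\<Sum>j<K. c j * (h / (1 + real (Suc j) * h) - 8 * u / ln x) - PS (e (Suc j)) (e j) G)"
    using S(4)[of G] unfolding e_def by (simp add: sum_subtractf)
  also have "\<dots> \<le> (\<Sum>j<K. PS (e (Suc j)) (e j) F)"
  proof (rule sum_mono)
    fix j assume j: "j \<in> {..<K}"
    have "c j * (h / (1 + real (Suc j) * h) - 8 * u / ln x) - PS (e (Suc j)) (e j) G
        \<le> c j * PS (e (Suc j)) (e j) (\<lambda>p. 1 / real p) - PS (e (Suc j)) (e j) G"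
    proof -
      have b: "1 \<le> 1 + real j * h \<and> 1 + real j * h < 1 + real (Suc j) * h \<and> 1 + real (Suc j) * h \<le> u"
        using S(5) j by simp
      have "PS (e (Suc j)) (e j) (\<lambda>p. 1 / real p) \<ge> ((1 + real (Suc j) * h) - (1 + real j * h)) / (1 + real (Suc j) * h) - 8 * u / ln x"
        unfolding e_def using block_recip(2)[OF x] b by blast
      then have "PS (e (Suc j)) (e j) (\<lambda>p. 1 / real p) \<ge> h / (1 + real (Suc j) * h) - 8 * u / ln x"
        using S(6) by simp
      then show ?thesis using c j by (simp add: mult_left_mono)
    qed
    also have "\<dots> = PS (e (Suc j)) (e j) (\<lambda>p. c j * (1 / real p) - G p)"
      by (simp only: PS_diff PS_cmult)
    also have "\<dots> \<le> PS (e (Suc j)) (e j) F"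
      by (rule PS_mono) (use F j in \<open>auto simp: e_def\<close>)
    finally show "c j * (h / (1 + real (Suc j) * h) - 8 * u / ln x) - PS (e (Suc j)) (e j) G \<le> PS (e (Suc j)) (e j) F" .
  qed
  also have "\<dots> = PS (x powr (1 / u)) x F" using S(4)[of F] unfolding e_def by simp
  finally show ?thesis .
qed

lemma pbounds:
  fixes x X0 V \<epsilon>' s s' :: real and p :: nat
  assumes x: "x > 1" and X0: "X0 \<ge> 1"
    and Uh: "\<forall>z\<ge>X0. \<forall>w>1. ln z \<le> V * ln w \<longrightarrow> \<bar>real (Psi z w) - R (ln z / ln w) * z\<bar> \<le> \<epsilon>' * z"
    and anti: "\<And>a b. 0 \<le> a \<Longrightarrow> a \<le> b \<Longrightarrow> b \<le> V \<Longrightarrow> R b \<le> R a"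
    and nn: "\<And>v. 0 \<le> v \<Longrightarrow> v \<le> V \<Longrightarrow> R v \<ge> 0"
    and e': "\<epsilon>' \<ge> 0"
    and s: "1 \<le> s" "s < s'" "s' - 1 \<le> V"
    and p: "prime p" "x powr (1 / s') < real p" "real p \<le> x powr (1 / s)"
  shows "real (Psi (x / real p) (real p)) \<le> x * (R (s - 1) + \<epsilon>') * (1 / real p) + x * (if real p > x / X0 then 1 / real p else 0)"
    and "real (Psi (x / real p) (real p)) \<ge> x * R (s' - 1) * (1 / real p) - (x * \<epsilon>' * (1 / real p) + x * (if real p > x / X0 then 1 / real p else 0))"
proof -
  define L where "L = ln x"
  have L: "L > 0" using x by (simp add: L_def)
  have p0: "real p > 0" using p(1) prime_gt_0_nat by simp
  have p1: "real p > 1" using p(1) prime_gt_1_nat by simp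
  define lp where "lp = ln (real p)"
  have lp0: "lp > 0" using p1 by (simp add: lp_def)
  have "ln (x powr (1 / s')) < lp" using p(2) x p0 unfolding lp_def by (subst ln_less_cancel_iff) auto
  then have lp1: "L / s' < lp" using x by (simp add: L_def ln_powr)
  have "lp \<le> ln (x powr (1 / s))" using p(3) p0 unfolding lp_def by (subst ln_le_cancel_iff) auto
  then have lp2: "lp \<le> L / s" using x by (simp add: L_def ln_powr)
  define z where "z = x / real p"
  have z0: "z > 0" using x p0 by (simp add: z_def)
  have lnz: "ln z = L - lp" using x p0 by (simp add: z_def L_def lp_def ln_div)
  define v where "v = ln z / lp"
  have v1: "v + 1 = L / lp" using lp0 by (simp add: v_def lnz field_simps)
  have vlo: "s - 1 \<le> v"
  proof -
    have "s \<le> L / lp" using lp2 lp0 s L by (simp add: field_simps)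
    then show ?thesis using v1 by simp
  qed
  have vhi: "v < s' - 1"
  proof -
    have "L / lp < s'" using lp1 lp0 s L by (simp add: field_simps)
    then show ?thesis using v1 by simp
  qed
  have Rv1: "R v \<le> R (s - 1)" using vlo vhi s by (intro anti) auto
  have Rv2: "R (s' - 1) \<le> R v" using vlo vhi s by (intro anti) auto
  have Rs0: "R (s - 1) \<ge> 0" using s by (intro nn) auto
  have Rs1: "R (s' - 1) \<le> 1" using anti[of 0 "s' - 1"] s R_one[of 0] by simp
  have zx: "z * 1 = x * (1 / real p)" by (simp add: z_def)
  have Pz: "real (Psi (x / real p) (real p)) = real (Psi z (real p))" by (simp add: z_def)
  show "real (Psi (x / real p) (real p)) \<le> x * (R (s - 1) + \<epsilon>') * (1 / real p) + x * (if real p > x / X0 then 1 / real p else 0)"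
  proof (cases "real p > x / X0")
    case False
    then have zX: "z \<ge> X0" using p0 X0 by (simp add: z_def field_simps)
    have "ln z \<le> V * lp"
    proof -
      have "ln z = v * lp" using lp0 by (simp add: v_def)
      also have "\<dots> \<le> V * lp" using vhi s lp0 by (intro mult_right_mono) auto
      finally show ?thesis .
    qed
    then have "\<bar>real (Psi z (real p)) - R v * z\<bar> \<le> \<epsilon>' * z" using Uh zX p1 unfolding v_def lp_def by blast
    then have "real (Psi z (real p)) \<le> (R v + \<epsilon>') * z" by (simp add: algebra_simps abs_le_iff)
    also have "\<dots> \<le> (R (s - 1) + \<epsilon>') * z" using Rv1 z0 by (intro mult_right_mono) auto
    also have "\<dots> = x * (R (s - 1) + \<epsilon>') * (1 / real p)" by (simp add: z_def)
    finally show ?thesis using False Pz by simp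
  next
    case True
    have "real (Psi z (real p)) \<le> z" using Psi_le z0 by simp
    also have "\<dots> \<le> x * (R (s - 1) + \<epsilon>') * (1 / real p) + x * (1 / real p)"
    proof -
      have "0 \<le> x * (R (s - 1) + \<epsilon>') * (1 / real p)" using x Rs0 e' p0 by simp
      then show ?thesis by (simp add: z_def)
    qed
    finally show ?thesis using True Pz by simp
  qed
  show "real (Psi (x / real p) (real p)) \<ge> x * R (s' - 1) * (1 / real p) - (x * \<epsilon>' * (1 / real p) + x * (if real p > x / X0 then 1 / real p else 0))"
  proof (cases "real p > x / X0")
    case False
    then have zX: "z \<ge> X0" using p0 X0 by (simp add: z_def field_simps)
    have "ln z \<le> V * lp"
    proof -
      have "ln z = v * lp" using lp0 by (simp add: v_def)
      also have "\<dots> \<le> V * lp" using vhi s lp0 by (intro mult_right_mono) auto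
      finally show ?thesis .
    qed
    then have "\<bar>real (Psi z (real p)) - R v * z\<bar> \<le> \<epsilon>' * z" using Uh zX p1 unfolding v_def lp_def by blast
    then have "(R v - \<epsilon>') * z \<le> real (Psi z (real p))" by (simp add: algebra_simps abs_le_iff)
    moreover have "(R (s' - 1) - \<epsilon>') * z \<le> (R v - \<epsilon>') * z" using Rv2 z0 by (intro mult_right_mono) auto
    moreover have "(R (s' - 1) - \<epsilon>') * z = x * R (s' - 1) * (1 / real p) - x * \<epsilon>' * (1 / real p)"
      by (simp add: z_def algebra_simps)
    ultimately show ?thesis using False Pz by simp
  next
    case True
    have "x * R (s' - 1) * (1 / real p) \<le> x * 1 * (1 / real p)"
      using Rs1 x p0 by (intro mult_right_mono mult_left_mono) auto
    moreover have "0 \<le> x * \<epsilon>' * (1 / real p)" using x e' p0 by simp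
    ultimately show ?thesis using True Pz by simp
  qed
qed

lemma tail_le:
  assumes y: "y \<le> x" and a: "1 < a" "a \<le> x"
  shows "PS y x (\<lambda>p. if real p > a then 1 / real p else 0) \<le> PS a x (\<lambda>p. 1 / real p)"
proof (cases "y \<le> a")
  case True
  have "PS y x (\<lambda>p. if real p > a then 1 / real p else 0) =
        PS y a (\<lambda>p. if real p > a then 1 / real p else 0) + PS a x (\<lambda>p. if real p > a then 1 / real p else 0)"
    by (rule PS_split) (use True a in auto)
  also have "PS y a (\<lambda>p. if real p > a then 1 / real p else 0) = PS y a (\<lambda>p. 0)"
    by (rule PS_cong) auto
  also have "PS a x (\<lambda>p. if real p > a then 1 / real p else 0) = PS a x (\<lambda>p. 1 / real p)"
    by (rule PS_cong) auto
  finally show ?thesis by (simp add: PS_def)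
next
  case False
  have "PS y x (\<lambda>p. if real p > a then 1 / real p else 0) = PS y x (\<lambda>p. 1 / real p)"
    by (rule PS_cong) (use False in auto)
  moreover have "PS a x (\<lambda>p. 1 / real p) = PS a y (\<lambda>p. 1 / real p) + PS y x (\<lambda>p. 1 / real p)"
    by (rule PS_split) (use False y in auto)
  moreover have "PS a y (\<lambda>p. 1 / real p) \<ge> 0" by (rule PS_nonneg) auto
  ultimately show ?thesis by simp
qed

lemma step_lemma:
  assumes V: "V \<ge> 1" and U: "Uasym V"
    and anti: "\<And>a b. 0 \<le> a \<Longrightarrow> a \<le> b \<Longrightarrow> b \<le> V \<Longrightarrow> R b \<le> R a"
    and nn: "\<And>v. 0 \<le> v \<Longrightarrow> v \<le> V \<Longrightarrow> R v \<ge> 0"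
    and u: "1 < u" "u \<le> V + 1"
  shows "Sasym u"
  unfolding Sasym_def
proof (intro allI impI)
  fix \<epsilon> :: real assume e: "\<epsilon> > 0"
  define K :: nat where "K = nat \<lceil>10 * (u - 1) / \<epsilon>\<rceil> + 1"
  have K: "K > 0" by (simp add: K_def)
  have Kge: "real K \<ge> 10 * (u - 1) / \<epsilon>" unfolding K_def by linarith
  define h where "h = (u - 1) / real K"
  have h0: "h > 0" using u K by (simp add: h_def)
  have hle: "h \<le> \<epsilon> / 10"
  proof -
    have "10 * (u - 1) \<le> \<epsilon> * real K" using Kge e by (simp add: field_simps)
    then show ?thesis using K by (simp add: h_def field_simps)
  qed
  have Kh: "real K * h = u - 1" using K by (simp add: h_def)
  define \<epsilon>' where "\<epsilon>' = min (\<epsilon> / (10 * (u + 1))) 1"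
  have e'0: "\<epsilon>' > 0" using e u by (simp add: \<epsilon>'_def)
  have e'1: "\<epsilon>' \<le> 1" by (simp add: \<epsilon>'_def)
  have e'u: "\<epsilon>' * u \<le> \<epsilon> / 10" and e'u1: "\<epsilon>' * (u - 1) \<le> \<epsilon> / 10"
  proof -
    have "\<epsilon>' * (u + 1) \<le> (\<epsilon> / (10 * (u + 1))) * (u + 1)" using u by (intro mult_right_mono) (auto simp: \<epsilon>'_def)
    also have "\<dots> = \<epsilon> / 10" using u by (simp add: field_simps)
    finally have "\<epsilon>' * (u + 1) \<le> \<epsilon> / 10" .
    then show "\<epsilon>' * u \<le> \<epsilon> / 10" "\<epsilon>' * (u - 1) \<le> \<epsilon> / 10" using e'0 by (simp_all add: algebra_simps)
  qed
  obtain X0 where X0: "X0 \<ge> 1"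
    and UX: "\<forall>z\<ge>X0. \<forall>w>1. ln z \<le> V * ln w \<longrightarrow> \<bar>real (Psi z w) - R (ln z / ln w) * z\<bar> \<le> \<epsilon>' * z"
    using U e'0 unfolding Uasym_def by blast
  have lX0: "ln X0 \<ge> 0" using X0 by simp
  define Lmin where "Lmin = max (max (160 * u * real K / \<epsilon>) (ln X0 + 10 * (ln X0 + 8) / \<epsilon>)) (8 * u) + 1"
  show "\<exists>X. \<forall>x\<ge>X. \<bar>real (Psi x (x powr (1 / u))) - R u * x\<bar> \<le> \<epsilon> * x"
  proof (intro exI[of _ "max (exp Lmin) (10 / \<epsilon>)"] allI impI)
    fix x assume xX: "max (exp Lmin) (10 / \<epsilon>) \<le> x"
    have x0: "x > 0" using xX by (smt (verit) exp_gt_zero max.cobounded1)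
    define L where "L = ln x"
    have LL: "L \<ge> Lmin" using xX x0 unfolding L_def by (metis exp_le_cancel_iff exp_ln max.boundedE)
    have L0: "L > 0" using LL u e lX0 unfolding Lmin_def by (smt (verit) max.cobounded2)
    have x1: "x > 1" using L0 x0 by (simp add: L_def ln_gt_zero_iff)
    have c1: "16 * u * real K / L \<le> \<epsilon> / 10"
    proof -
      have "160 * u * real K / \<epsilon> \<le> L" using LL unfolding Lmin_def by linarith
      then show ?thesis using L0 e by (simp add: field_simps)
    qed
    have c3: "8 * u / L \<le> 1" using LL L0 unfolding Lmin_def by (simp add: field_simps)
    have c4: "1 \<le> \<epsilon> * x / 10" using xX e by (simp add: field_simps)
    have LX: "L - ln X0 > 0" and c2': "ln X0 + 10 * (ln X0 + 8) / \<epsilon> \<le> L"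
      using LL e lX0 unfolding Lmin_def by (smt (verit) max.cobounded1 max.cobounded2 divide_nonneg_nonneg)+
    have c2: "(ln X0 + 8) / (L - ln X0) \<le> \<epsilon> / 10"
    proof -
      have "10 * (ln X0 + 8) / \<epsilon> \<le> L - ln X0" using c2' by simp
      then show ?thesis using LX e by (simp add: field_simps)
    qed
    have xX0: "x / X0 > 1"
    proof -
      have "ln X0 < ln x" using LX by (simp add: L_def)
      then have "X0 < x" using X0 x0 by simp
      then show ?thesis using X0 by simp
    qed
    define y where "y = x powr (1 / u)"
    have y1: "y > 1" using x1 u by (simp add: y_def)
    have yx: "y \<le> x" using x1 u by (simp add: y_def powr_le_cancel_iff[of x "1/u" 1, simplified])
    define F where "F = (\<lambda>p::nat. real (Psi (x / real p) (real p)))"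
    define T where "T = (\<lambda>p::nat. if real p > x / X0 then 1 / real p else 0)"
    have B: "real (nat \<lfloor>x\<rfloor>) = real (Psi x y) + PS y x F"
      unfolding F_def by (rule buchstab) (use x0 in simp)
    have fl: "x - 1 \<le> real (nat \<lfloor>x\<rfloor>)" "real (nat \<lfloor>x\<rfloor>) \<le> x"
      using floor_close[of x] x0 by (auto simp: abs_le_iff)
    have tail: "PS y x T \<le> \<epsilon> / 10"
    proof -
      have "PS y x T \<le> PS (x / X0) x (\<lambda>p. 1 / real p)"
        unfolding T_def by (rule tail_le[OF yx xX0]) (use X0 x0 in \<open>simp add: field_simps\<close>)
      also have "\<dots> \<le> (ln x - ln (x / X0) + 8) / ln (x / X0)"
        by (rule recip_upper[OF xX0]) (use X0 x0 in \<open>simp add: field_simps\<close>)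
      also have "\<dots> = (ln X0 + 8) / (L - ln X0)" using x0 X0 by (simp add: ln_div L_def)
      finally show ?thesis using c2 by linarith
    qed
    have allrec: "PS y x (\<lambda>p. 1 / real p) \<le> u"
    proof -
      have "PS y x (\<lambda>p. 1 / real p) \<le> (ln x - ln y + 8) / ln y" by (rule recip_upper[OF y1 yx])
      also have "\<dots> = u - 1 + 8 * u / L" using u L0 x1 by (simp add: y_def L_def ln_powr field_simps)
      finally show ?thesis using c3 by simp
    qed
    have Tnn: "PS y x T \<ge> 0" unfolding T_def by (rule PS_nonneg) auto
    define Rj where "Rj = (\<lambda>j::nat. R ((1 + real j * h) - 1))"
    note S = blocks_setup[OF x1 u(1) K h_def]
    have blk: "1 \<le> 1 + real j * h" "1 + real j * h < 1 + real (Suc j) * h" "(1 + real (Suc j) * h) - 1 \<le> V"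
      if "j < K" for j using S(5)[OF that] u by auto
    have Rj01: "0 \<le> Rj j \<and> Rj j \<le> 1" if "j \<le> K" for j
    proof -
      have "real j * h \<le> real K * h" using that h0 by (intro mult_right_mono) auto
      then have a: "0 \<le> real j * h" "real j * h \<le> V" using Kh u h0 by auto
      have "Rj j \<le> R 0" unfolding Rj_def using a by (intro anti) auto
      moreover have "0 \<le> Rj j" unfolding Rj_def using a by (intro nn) auto
      ultimately show ?thesis using R_one[of 0] by simp
    qed
    have up: "PS y x F \<le> x * (1 - R u + h) + x * (\<epsilon>' * (u - 1) + 16 * u * real K / L) + x * PS y x T"
    proof -
      have "PS y x F \<le> (\<Sum>j<K. (x * (Rj j + \<epsilon>')) * (h / (1 + real j * h) + 8 * u / ln x)) + PS y x (\<lambda>p. x * T p)"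
        unfolding y_def
      proof (rule blocks_upper[OF x1 u(1) K h_def])
        show "\<And>j. j < K \<Longrightarrow> 0 \<le> x * (Rj j + \<epsilon>')" using Rj01 x0 e'0 by (simp add: add_nonneg_nonneg)
        fix j p assume j: "j < K" and p: "prime p" "x powr (1 / (1 + real (Suc j) * h)) < real p"
          "real p \<le> x powr (1 / (1 + real j * h))"
        show "F p \<le> x * (Rj j + \<epsilon>') * (1 / real p) + x * T p"
          using pbounds(1)[OF x1 X0 UX anti nn _ blk[OF j] p] e'0 unfolding F_def T_def Rj_def by simp
      qed
      also have "(\<Sum>j<K. (x * (Rj j + \<epsilon>')) * (h / (1 + real j * h) + 8 * u / ln x))
          \<le> (\<Sum>j<K. x * (Rj j * h / (1 + real j * h)) + x * (\<epsilon>' * h + 16 * u / L))"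
      proof (rule sum_mono)
        fix j assume j: "j \<in> {..<K}"
        have t1: "1 \<le> 1 + real j * h" using h0 by simp
        have r: "0 \<le> Rj j" "Rj j \<le> 1" using Rj01[of j] j by auto
        have a1: "\<epsilon>' * (h / (1 + real j * h)) \<le> \<epsilon>' * h"
          using t1 h0 e'0 by (intro mult_left_mono) (auto simp: divide_le_eq)
        have a2: "(Rj j + \<epsilon>') * (8 * u / L) \<le> 2 * (8 * u / L)"
          using r e'1 u L0 by (intro mult_right_mono) auto
        have "(Rj j + \<epsilon>') * (h / (1 + real j * h) + 8 * u / L)
            = Rj j * h / (1 + real j * h) + \<epsilon>' * (h / (1 + real j * h)) + (Rj j + \<epsilon>') * (8 * u / L)"
          by (simp add: algebra_simps add_divide_distrib)
        also have "\<dots> \<le> Rj j * h / (1 + real j * h) + (\<epsilon>' * h + 16 * u / L)" using a1 a2 by simp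
        finally have "(Rj j + \<epsilon>') * (h / (1 + real j * h) + 8 * u / L) \<le> Rj j * h / (1 + real j * h) + (\<epsilon>' * h + 16 * u / L)" .
        then have "x * ((Rj j + \<epsilon>') * (h / (1 + real j * h) + 8 * u / L)) \<le> x * (Rj j * h / (1 + real j * h) + (\<epsilon>' * h + 16 * u / L))"
          using x0 by (intro mult_left_mono) auto
        then show "(x * (Rj j + \<epsilon>')) * (h / (1 + real j * h) + 8 * u / ln x) \<le> x * (Rj j * h / (1 + real j * h)) + x * (\<epsilon>' * h + 16 * u / L)"
          by (simp add: L_def algebra_simps)
      qed
      also have "\<dots> = x * (\<Sum>j<K. Rj j * h / (1 + real j * h)) + x * (\<epsilon>' * (real K * h) + 16 * u * real K / L)"
        by (simp add: sum.distrib sum_distrib_left algebra_simps)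
      also have "\<dots> \<le> x * (1 - R u + h) + x * (\<epsilon>' * (u - 1) + 16 * u * real K / L)"
      proof -
        have "(\<Sum>j<K. Rj j * h / (1 + real j * h)) \<le> 1 - R u + h"
          unfolding Rj_def by (rule riemann(2)[OF u(1) K h_def]) (use anti nn u in auto)
        then show ?thesis using x0 Kh by (simp add: mult_left_mono)
      qed
      also have "PS y x (\<lambda>p. x * T p) = x * PS y x T" by (rule PS_cmult)
      finally show ?thesis by simp
    qed
    have lo: "PS y x F \<ge> x * (1 - R u - h) - x * (8 * u * real K / L) - (x * \<epsilon>' * u + x * PS y x T)"
    proof -
      have "(\<Sum>j<K. (x * Rj (Suc j)) * (h / (1 + real (Suc j) * h) - 8 * u / ln x)) - PS y x (\<lambda>p. x * \<epsilon>' * (1 / real p) + x * T p) \<le> PS y x F"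
        unfolding y_def
      proof (rule blocks_lower[OF x1 u(1) K h_def])
        show "\<And>j. j < K \<Longrightarrow> 0 \<le> x * Rj (Suc j)" using Rj01 x0 by simp
        fix j p assume j: "j < K" and p: "prime p" "x powr (1 / (1 + real (Suc j) * h)) < real p"
          "real p \<le> x powr (1 / (1 + real j * h))"
        show "F p \<ge> x * Rj (Suc j) * (1 / real p) - (x * \<epsilon>' * (1 / real p) + x * T p)"
          using pbounds(2)[OF x1 X0 UX anti nn _ blk[OF j] p] e'0 unfolding F_def T_def Rj_def by simp
      qed
      moreover have "(\<Sum>j<K. (x * Rj (Suc j)) * (h / (1 + real (Suc j) * h) - 8 * u / ln x))
          \<ge> (\<Sum>j<K. x * (Rj (Suc j) * h / (1 + real (Suc j) * h)) - x * (8 * u / L))"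
      proof (rule sum_mono)
        fix j assume j: "j \<in> {..<K}"
        have r: "0 \<le> Rj (Suc j)" "Rj (Suc j) \<le> 1" using Rj01[of "Suc j"] j by auto
        have "Rj (Suc j) * (8 * u / L) \<le> 1 * (8 * u / L)" using r u L0 by (intro mult_right_mono) auto
        then have "Rj (Suc j) * h / (1 + real (Suc j) * h) - 8 * u / L \<le> Rj (Suc j) * (h / (1 + real (Suc j) * h) - 8 * u / L)"
          by (simp add: algebra_simps)
        then have "x * (Rj (Suc j) * h / (1 + real (Suc j) * h) - 8 * u / L) \<le> x * (Rj (Suc j) * (h / (1 + real (Suc j) * h) - 8 * u / L))"
          using x0 by (intro mult_left_mono) auto
        then show "x * (Rj (Suc j) * h / (1 + real (Suc j) * h)) - x * (8 * u / L) \<le> (x * Rj (Suc j)) * (h / (1 + real (Suc j) * h) - 8 * u / ln x)"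
          by (simp add: L_def algebra_simps)
      qed
      moreover have "(\<Sum>j<K. x * (Rj (Suc j) * h / (1 + real (Suc j) * h)) - x * (8 * u / L))
          = x * (\<Sum>j<K. Rj (Suc j) * h / (1 + real (Suc j) * h)) - x * (8 * u * real K / L)"
        by (simp add: sum_subtractf sum_distrib_left algebra_simps)
      moreover have "x * (\<Sum>j<K. Rj (Suc j) * h / (1 + real (Suc j) * h)) \<ge> x * (1 - R u - h)"
      proof -
        have "(\<Sum>j<K. Rj (Suc j) * h / (1 + real (Suc j) * h)) \<ge> 1 - R u - h"
          unfolding Rj_def by (rule riemann(1)[OF u(1) K h_def]) (use anti nn u in auto)
        then show ?thesis using x0 by (simp add: mult_left_mono)
      qed
      moreover have "PS y x (\<lambda>p. x * \<epsilon>' * (1 / real p) + x * T p) \<le> x * \<epsilon>' * u + x * PS y x T"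
      proof -
        have "PS y x (\<lambda>p. x * \<epsilon>' * (1 / real p) + x * T p) = x * \<epsilon>' * PS y x (\<lambda>p. 1 / real p) + x * PS y x T"
          by (simp only: PS_add PS_cmult)
        moreover have "x * \<epsilon>' * PS y x (\<lambda>p. 1 / real p) \<le> x * \<epsilon>' * u"
          using allrec x0 e'0 by (intro mult_left_mono) auto
        ultimately show ?thesis by simp
      qed
      ultimately show ?thesis by linarith
    qed
    have Psi_eq: "real (Psi x (x powr (1 / u))) = real (nat \<lfloor>x\<rfloor>) - PS y x F" using B by (simp add: y_def)
    have xT: "x * PS y x T \<le> x * (\<epsilon> / 10)" using tail x0 by (intro mult_left_mono) auto
    have xh: "x * h \<le> x * (\<epsilon> / 10)" using hle x0 by (intro mult_left_mono) auto
    have xe1: "x * (\<epsilon>' * (u - 1)) \<le> x * (\<epsilon> / 10)" using e'u1 x0 by (intro mult_left_mono) auto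
    have xe2: "x * \<epsilon>' * u \<le> x * (\<epsilon> / 10)" using e'u x0 by (simp add: mult_left_mono mult.assoc)
    have xc1: "x * (16 * u * real K / L) \<le> x * (\<epsilon> / 10)" using c1 x0 by (intro mult_left_mono) auto
    have xc1': "x * (8 * u * real K / L) \<le> x * (\<epsilon> / 10)"
    proof -
      have "8 * u * real K / L \<le> 16 * u * real K / L" using u L0 by (simp add: divide_right_mono)
      then show ?thesis using c1 x0 by (intro mult_left_mono) auto
    qed
    have e1: "x * (1 - R u - h) = x - R u * x - x * h" by (simp add: algebra_simps)
    have e2: "x * (1 - R u + h) = x - R u * x + x * h" by (simp add: algebra_simps)
    have e3: "x * (\<epsilon> / 10) = \<epsilon> * x / 10" by simp
    have e4: "x * (\<epsilon>' * (u - 1) + 16 * u * real K / L) = x * (\<epsilon>' * (u - 1)) + x * (16 * u * real K / L)"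
      by (simp add: algebra_simps)
    have ex0: "\<epsilon> * x \<ge> 0" using e x0 by simp
    have A1: "real (Psi x (x powr (1 / u))) - R u * x \<le> \<epsilon> * x"
      using Psi_eq lo fl xT xh xe2 xc1' e1 e3 ex0 by linarith
    have A2: "R u * x - real (Psi x (x powr (1 / u))) \<le> \<epsilon> * x"
      using Psi_eq up fl xT xh xe1 xc1 c4 e2 e3 e4 ex0 by linarith
    show "\<bar>real (Psi x (x powr (1 / u))) - R u * x\<bar> \<le> \<epsilon> * x" using A1 A2 by simp
  qed
qed

lemma grid_find:
  fixes g :: "nat \<Rightarrow> real" and M :: nat
  assumes M: "M > 0" and g0: "g 0 \<le> v" and gM: "v \<le> g M"
  shows "\<exists>i<M. g i \<le> v \<and> v \<le> g (Suc i)"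
proof -
  define I where "I = {i. i < M \<and> g i \<le> v}"
  have fin: "finite I" unfolding I_def by simp
  have ne: "0 \<in> I" unfolding I_def using M g0 by simp
  define i where "i = Max I"
  have iI: "i \<in> I" unfolding i_def using Max_in[OF fin] ne by blast
  have imax: "\<And>k. k \<in> I \<Longrightarrow> k \<le> i" unfolding i_def using Max_ge[OF fin] by blast
  have "v \<le> g (Suc i)"
  proof (cases "Suc i < M")
    case True
    have "Suc i \<notin> I" using imax by fastforce
    then show ?thesis using True unfolding I_def by simp
  next
    case False
    then have "Suc i = M" using iI unfolding I_def by simp
    then show ?thesis using gM by simp
  qed
  then show ?thesis using iI unfolding I_def by blast
qed

lemma upgrade:
  assumes V: "V \<ge> 1" and S: "\<And>u. 0 < u \<Longrightarrow> u \<le> V \<Longrightarrow> Sasym u"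
  shows "Uasym V"
  unfolding Uasym_def
proof (intro allI impI)
  fix \<epsilon> :: real assume e: "\<epsilon> > 0"
  have "uniformly_continuous_on {1..V} R"
    by (rule compact_uniformly_continuous) (auto intro: continuous_on_subset[OF R_cont])
  then obtain \<eta> where \<eta>: "\<eta> > 0" and uc: "\<And>a b. a \<in> {1..V} \<Longrightarrow> b \<in> {1..V} \<Longrightarrow> dist b a < \<eta> \<Longrightarrow> dist (R b) (R a) < \<epsilon> / 2"
    unfolding uniformly_continuous_on_def using e by (metis half_gt_zero)
  define M :: nat where "M = nat \<lceil>(V - 1) / \<eta>\<rceil> + 1"
  have M: "M > 0" by (simp add: M_def)
  define \<delta> where "\<delta> = (V - 1) / real M"
  have \<delta>0: "\<delta> \<ge> 0" using V M by (simp add: \<delta>_def)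
  have \<delta>\<eta>: "\<delta> < \<eta>"
  proof -
    have "(V - 1) / \<eta> < real M" unfolding M_def by linarith
    then have "V - 1 < \<eta> * real M" using \<eta> by (simp add: field_simps)
    then show ?thesis using M by (simp add: \<delta>_def field_simps)
  qed
  define g where "g = (\<lambda>i::nat. 1 + real i * \<delta>)"
  have gM: "g M = V" using M by (simp add: g_def \<delta>_def)
  have grange: "g i \<in> {1..V}" if "i \<le> M" for i
  proof -
    have "real i * \<delta> \<le> real M * \<delta>" using that \<delta>0 by (intro mult_right_mono) auto
    then show ?thesis using gM \<delta>0 by (simp add: g_def)
  qed
  have "\<forall>i. \<exists>X. i \<le> M \<longrightarrow> (\<forall>x\<ge>X. \<bar>real (Psi x (x powr (1 / g i))) - R (g i) * x\<bar> \<le> \<epsilon> / 2 * x)"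
  proof
    fix i
    show "\<exists>X. i \<le> M \<longrightarrow> (\<forall>x\<ge>X. \<bar>real (Psi x (x powr (1 / g i))) - R (g i) * x\<bar> \<le> \<epsilon> / 2 * x)"
    proof (cases "i \<le> M")
      case True
      have "Sasym (g i)" using grange[OF True] by (intro S) auto
      then show ?thesis using e unfolding Sasym_def by (metis half_gt_zero)
    qed simp
  qed
  then obtain Xf where Xf: "\<And>i x. i \<le> M \<Longrightarrow> x \<ge> Xf i \<Longrightarrow> \<bar>real (Psi x (x powr (1 / g i))) - R (g i) * x\<bar> \<le> \<epsilon> / 2 * x"
    by metis
  define X where "X = max (max 1 (2 / \<epsilon>)) (Max (Xf ` {..M}))"
  have XXf: "Xf i \<le> X" if "i \<le> M" for i
    unfolding X_def using that by (intro max.coboundedI2 Max_ge) auto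
  show "\<exists>X\<ge>1. \<forall>z\<ge>X. \<forall>w>1. ln z \<le> V * ln w \<longrightarrow> \<bar>real (Psi z w) - R (ln z / ln w) * z\<bar> \<le> \<epsilon> * z"
  proof (intro exI[of _ X] conjI allI impI)
    show "1 \<le> X" unfolding X_def by simp
    fix z w assume zX: "X \<le> z" and w: "w > 1" and zw: "ln z \<le> V * ln w"
    have z1: "z \<ge> 1" using zX unfolding X_def by simp
    have ez: "2 \<le> \<epsilon> * z" using zX e unfolding X_def by (simp add: field_simps)
    have lw: "ln w > 0" using w by simp
    define v where "v = ln z / ln w"
    have v0: "v \<ge> 0" using z1 lw by (simp add: v_def)
    have vV: "v \<le> V" using zw lw by (simp add: v_def divide_le_eq)
    show "\<bar>real (Psi z w) - R (ln z / ln w) * z\<bar> \<le> \<epsilon> * z"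
    proof (cases "v \<le> 1")
      case True
      have "ln z \<le> ln w" using True lw by (simp add: v_def divide_le_eq)
      then have "z \<le> w" using z1 w by simp
      then have "Psi z w = nat \<lfloor>z\<rfloor>" by (rule Psi_big)
      moreover have "R v = 1" using True v0 by (intro R_one)
      ultimately show ?thesis using floor_close[of z] z1 ez unfolding v_def[symmetric] by simp
    next
      case False
      obtain i where i: "i < M" "g i \<le> v" "v \<le> g (Suc i)"
        using grid_find[OF M, of g v] False vV gM by (auto simp: g_def)
      have gi: "g i \<ge> 1" "g (Suc i) \<ge> 1" using grange[of i] grange[of "Suc i"] i by auto
      have L: "ln z > 0" using False lw by (simp add: v_def)
      have lnw: "ln w = ln z / v" using lw False by (simp add: v_def)
      have w1: "w \<le> z powr (1 / g i)"
      proof -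
        have "ln z / v \<le> ln z / g i" using i gi L by (intro divide_left_mono) auto
        then have "ln w \<le> ln (z powr (1 / g i))" using lnw z1 by (simp add: ln_powr)
        moreover have "z powr (1 / g i) > 0" using z1 by simp
        ultimately show ?thesis using w ln_le_cancel_iff[of w "z powr (1 / g i)"] by linarith
      qed
      have w2: "z powr (1 / g (Suc i)) \<le> w"
      proof -
        have "ln z / g (Suc i) \<le> ln z / v" using i gi L False by (intro divide_left_mono) auto
        then have "ln (z powr (1 / g (Suc i))) \<le> ln w" using lnw z1 by (simp add: ln_powr)
        moreover have "z powr (1 / g (Suc i)) > 0" using z1 by simp
        ultimately show ?thesis using w ln_le_cancel_iff[of "z powr (1 / g (Suc i))" w] by linarith
      qed
      have P1: "real (Psi z w) \<le> real (Psi z (z powr (1 / g i)))" using Psi_mono[OF w1] by simp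
      have P2: "real (Psi z (z powr (1 / g (Suc i)))) \<le> real (Psi z w)" using Psi_mono[OF w2] by simp
      have X1: "\<bar>real (Psi z (z powr (1 / g i))) - R (g i) * z\<bar> \<le> \<epsilon> / 2 * z"
        using Xf[of i z] XXf[of i] i zX by simp
      have X2: "\<bar>real (Psi z (z powr (1 / g (Suc i)))) - R (g (Suc i)) * z\<bar> \<le> \<epsilon> / 2 * z"
        using Xf[of "Suc i" z] XXf[of "Suc i"] i zX by simp
      have vr: "v \<in> {1..V}" using False vV by simp
      have d1: "\<bar>R (g i) - R v\<bar> < \<epsilon> / 2"
      proof -
        have "g (Suc i) - g i = \<delta>" by (simp add: g_def algebra_simps)
        then have "dist (g i) v < \<eta>" using i \<delta>\<eta> by (simp add: dist_real_def)
        then show ?thesis using uc[of v "g i"] vr grange[of i] i by (simp add: dist_real_def)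
      qed
      have d2: "\<bar>R (g (Suc i)) - R v\<bar> < \<epsilon> / 2"
      proof -
        have "g (Suc i) - g i = \<delta>" by (simp add: g_def algebra_simps)
        then have "dist (g (Suc i)) v < \<eta>" using i \<delta>\<eta> by (simp add: dist_real_def)
        then show ?thesis using uc[of v "g (Suc i)"] vr grange[of "Suc i"] i by (simp add: dist_real_def)
      qed
      have m1: "R (g i) * z \<le> R v * z + \<epsilon> / 2 * z"
      proof -
        have "R (g i) \<le> R v + \<epsilon> / 2" using d1 by linarith
        then have "R (g i) * z \<le> (R v + \<epsilon> / 2) * z" using z1 by (intro mult_right_mono) auto
        then show ?thesis by (simp add: algebra_simps)
      qed
      have m2: "R v * z - \<epsilon> / 2 * z \<le> R (g (Suc i)) * z"
      proof -
        have "R v - \<epsilon> / 2 \<le> R (g (Suc i))" using d2 by linarith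
        then have "(R v - \<epsilon> / 2) * z \<le> R (g (Suc i)) * z" using z1 by (intro mult_right_mono) auto
        then show ?thesis by (simp add: algebra_simps)
      qed
      have "\<epsilon> / 2 * z + \<epsilon> / 2 * z = \<epsilon> * z" by simp
      moreover note X1' = X1[unfolded abs_le_iff] and X2' = X2[unfolded abs_le_iff]
      ultimately show ?thesis using P1 P2 m1 m2 unfolding v_def[symmetric] abs_le_iff by linarith
    qed
  qed
qed

lemma main_induct: "N \<ge> 1 \<Longrightarrow> Uasym (real N) \<and> (\<forall>v. 0 \<le> v \<and> v \<le> real N \<longrightarrow> R v \<ge> 0)"
proof (induction N)
  case 0
  then show ?case by simp
next
  case (Suc N)
  show ?case
  proof (cases "N = 0")
    case True
    then show ?thesis using Uasym_one R_one by simp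
  next
    case False
    then have IH: "Uasym (real N)" "\<And>v. 0 \<le> v \<Longrightarrow> v \<le> real N \<Longrightarrow> R v \<ge> 0" using Suc by auto
    have N1: "real N \<ge> 1" using False by simp
    have anti: "\<And>a b. 0 \<le> a \<Longrightarrow> a \<le> b \<Longrightarrow> b \<le> real N \<Longrightarrow> R b \<le> R a"
      using R_antimono[of "real N"] IH(2) by simp
    have S: "Sasym u" if "0 < u" "u \<le> real (Suc N)" for u
    proof (cases "u \<le> 1")
      case True
      then show ?thesis using that Sasym_small by simp
    next
      case False
      show ?thesis by (rule step_lemma[OF N1 IH(1) anti IH(2)]) (use False that in auto)
    qed
    have nn: "R v \<ge> 0" if "0 \<le> v" "v \<le> real (Suc N)" for v
    proof (cases "v = 0")
      case True
      then show ?thesis using R_one by simp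
    next
      case False
      then show ?thesis using S[of v] that Sasym_nonneg by simp
    qed
    have "Uasym (real (Suc N))" by (rule upgrade) (use S in auto)
    then show ?thesis using nn by blast
  qed
qed

lemma Sasym_all:
  assumes "u > 0"
  shows "Sasym u"
proof (cases "u \<le> 1")
  case True
  then show ?thesis using assms Sasym_small by simp
next
  case False
  define N where "N = nat \<lceil>u\<rceil>"
  have N1: "N \<ge> 1" using False unfolding N_def by linarith
  have uN: "u \<le> real N" unfolding N_def by linarith
  have IH: "Uasym (real N)" "\<And>v. 0 \<le> v \<Longrightarrow> v \<le> real N \<Longrightarrow> R v \<ge> 0" using main_induct[OF N1] by auto
  have anti: "\<And>a b. 0 \<le> a \<Longrightarrow> a \<le> b \<Longrightarrow> b \<le> real N \<Longrightarrow> R b \<le> R a"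
    using R_antimono[of "real N"] IH(2) by simp
  show ?thesis by (rule step_lemma[OF _ IH(1) anti IH(2)]) (use N1 uN False in auto)
qed

lemma psi_lower:
  assumes "u > 0" "\<epsilon> > 0"
  shows "\<exists>X. \<forall>x\<ge>X. real (Psi x (x powr (1 / u))) \<ge> (R u - \<epsilon>) * x"
proof -
  obtain X where X: "\<forall>x\<ge>X. \<bar>real (Psi x (x powr (1 / u))) - R u * x\<bar> \<le> \<epsilon> * x"
    using Sasym_all[OF assms(1)] assms(2) unfolding Sasym_def by blast
  show ?thesis
  proof (intro exI[of _ X] allI impI)
    fix x assume "x \<ge> X"
    then have "\<bar>real (Psi x (x powr (1 / u))) - R u * x\<bar> \<le> \<epsilon> * x" using X by blast
    then show "real (Psi x (x powr (1 / u))) \<ge> (R u - \<epsilon>) * x" by (simp add: algebra_simps abs_le_iff)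
  qed
qed

lemma roots_card:
  fixes q d :: nat
  assumes q: "prime q" and d: "d > 0"
  shows "card {n::nat. 1 \<le> n \<and> n \<le> q - 1 \<and> [n ^ d = 1] (mod q)} \<le> d"
proof -
  interpret RP: residues_prime q "residue_ring (int q)"
    using q by (simp add: residues_prime_def)
  define T where "T = {x \<in> carrier (residue_ring (int q)). x [^]\<^bsub>residue_ring (int q)\<^esub> d = \<one>\<^bsub>residue_ring (int q)\<^esub>}"
  have cT: "card T \<le> d" unfolding T_def by (rule RP.num_roots_le_deg) (use d in auto)
  have fT: "finite T" unfolding T_def by simp
  have sub: "{n::nat. 1 \<le> n \<and> n \<le> q - 1 \<and> [n ^ d = 1] (mod q)} \<subseteq> nat ` T"
  proof
    fix n assume "n \<in> {n::nat. 1 \<le> n \<and> n \<le> q - 1 \<and> [n ^ d = 1] (mod q)}"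
    then have n: "1 \<le> n" "n \<le> q - 1" "[n ^ d = 1] (mod q)" by auto
    have q1: "q \<ge> 2" using q prime_ge_2_nat by simp
    have car: "int n \<in> carrier (residue_ring (int q))" using n q1 by (simp add: RP.res_carrier_eq)
    have "int n mod int q = int n" using n q1 by simp
    then have "int n [^]\<^bsub>residue_ring (int q)\<^esub> d = (int n) ^ d mod int q"
      using RP.pow_cong[of "int n" d] by simp
    also have "\<dots> = 1 mod int q"
      using n(3) by (metis cong_def of_nat_1 of_nat_mod of_nat_power)
    also have "\<dots> = \<one>\<^bsub>residue_ring (int q)\<^esub>" using RP.one_cong by simp
    finally have "int n \<in> T" unfolding T_def using car by simp
    then show "n \<in> nat ` T" by (metis image_eqI nat_int)
  qed
  have "card {n::nat. 1 \<le> n \<and> n \<le> q - 1 \<and> [n ^ d = 1] (mod q)} \<le> card (nat ` T)"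
    by (rule card_mono) (use fT sub in auto)
  also have "\<dots> \<le> card T" by (rule card_image_le[OF fT])
  finally show ?thesis using cT by simp
qed

lemma smooth_pow:
  fixes q d n :: nat
  assumes n: "n \<ge> 1" and P: "\<And>p. prime p \<Longrightarrow> p dvd n \<Longrightarrow> [p ^ d = 1] (mod q)"
  shows "[n ^ d = 1] (mod q)"
  using n P
proof (induction n rule: less_induct)
  case (less n)
  show ?case
  proof (cases "n = 1")
    case True
    then show ?thesis by simp
  next
    case False
    then have "n \<noteq> 1" by simp
    then obtain p where p: "prime p" "p dvd n" using prime_factor_nat by blast
    then obtain m where m: "n = p * m" by (elim dvdE)
    have p1: "p > 1" using p prime_gt_1_nat by simp
    have m1: "m \<ge> 1" using m less.prems(1) by (cases m) auto
    have lt: "m < n" using m p1 m1 by simp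
    have mm: "[m ^ d = 1] (mod q)"
    proof (rule less.IH[OF lt m1])
      fix r assume "prime r" "r dvd m"
      then show "[r ^ d = 1] (mod q)" using less.prems(2) m by auto
    qed
    have pp: "[p ^ d = 1] (mod q)" using less.prems(2) p by blast
    have "[p ^ d * m ^ d = 1 * 1] (mod q)" by (rule cong_mult[OF pp mm])
    then show ?thesis using m by (simp add: power_mult_distrib)
  qed
qed

theorem mainTheorem8:
  fixes \<delta> c :: real
  assumes "\<delta> > 0" and "0 < c" and "c < dickman_rho (1 / \<delta>)"
  shows "\<exists>q0::nat. \<forall>q::nat. prime q \<and> q \<ge> q0 \<longrightarrow>
           (\<forall>d1 d2 :: nat. real d1 \<le> real d2 \<and> real d2 \<le> c * real q \<and>
              (\<forall>n::nat. 1 \<le> n \<and> real n \<le> real q powr \<delta> \<longrightarrow> [n ^ d2 = n ^ d1] (mod q))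
              \<longrightarrow> d1 = d2)"
proof -
  define u where "u = 1 / \<delta>"
  have u0: "u > 0" using assms(1) by (simp add: u_def)
  have iu: "1 / u = \<delta>" by (simp add: u_def)
  define \<epsilon> where "\<epsilon> = (R u - c) / 2"
  have e: "\<epsilon> > 0" using assms(3) by (simp add: \<epsilon>_def u_def)
  have Rc: "R u - \<epsilon> - c = \<epsilon>" by (simp add: \<epsilon>_def field_simps)
  obtain X where X: "\<And>x. x \<ge> X \<Longrightarrow> real (Psi x (x powr \<delta>)) \<ge> (R u - \<epsilon>) * x"
    using psi_lower[OF u0 e] iu by auto
  define q0 :: nat where "q0 = nat \<lceil>\<bar>X\<bar> + \<bar>R u\<bar> / \<epsilon> + 2\<rceil>"
  show ?thesis
  proof (intro exI[of _ q0] allI impI)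
    fix q :: nat and d1 d2 :: nat
    assume q: "prime q \<and> q0 \<le> q"
    assume H: "real d1 \<le> real d2 \<and> real d2 \<le> c * real q \<and>
              (\<forall>n::nat. 1 \<le> n \<and> real n \<le> real q powr \<delta> \<longrightarrow> [n ^ d2 = n ^ d1] (mod q))"
    have qp: "prime q" using q by simp
    have qq0: "real q \<ge> \<bar>X\<bar> + \<bar>R u\<bar> / \<epsilon> + 2" using q unfolding q0_def by linarith
    have nn1: "\<bar>R u\<bar> / \<epsilon> \<ge> 0" "X \<le> \<bar>X\<bar>" "\<bar>X\<bar> \<ge> 0" using e by auto
    show "d1 = d2"
    proof (rule ccontr)
      assume ne: "d1 \<noteq> d2"
      have d12: "d1 < d2" using H ne by simp
      define d where "d = d2 - d1"
      have d0: "d > 0" using d12 by (simp add: d_def)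
      have d2eq: "d2 = d1 + d" using d12 by (simp add: d_def)
      define A where "A = {n::nat. 1 \<le> n \<and> real n \<le> real q - 1 \<and> smooth (real q powr \<delta>) n}"
      have cardA: "real (card A) > real d"
      proof -
        have q1: "real q - 1 \<ge> X" using qq0 nn1 by linarith
        have "(R u - \<epsilon>) * (real q - 1) \<le> real (Psi (real q - 1) ((real q - 1) powr \<delta>))" by (rule X[OF q1])
        also have "\<dots> \<le> real (Psi (real q - 1) (real q powr \<delta>))"
        proof -
          have "(real q - 1) powr \<delta> \<le> real q powr \<delta>"
            using qq0 nn1 assms(1) by (intro powr_mono2) auto
          then show ?thesis using Psi_mono by simp
        qed
        also have "\<dots> = real (card A)" unfolding Psi_def A_def ..
        finally have a: "(R u - \<epsilon>) * (real q - 1) \<le> real (card A)" .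
        have "\<epsilon> * real q > R u - \<epsilon>"
        proof -
          have "real q > \<bar>R u\<bar> / \<epsilon>" using qq0 nn1 by linarith
          then have "\<epsilon> * real q > \<bar>R u\<bar>" using e by (simp add: field_simps)
          then show ?thesis using e by linarith
        qed
        then have "c * real q < (R u - \<epsilon>) * (real q - 1)" using Rc by (simp add: algebra_simps)
        moreover have "real d \<le> c * real q" using H d2eq by simp
        ultimately show ?thesis using a by linarith
      qed
      have sub: "A \<subseteq> {n::nat. 1 \<le> n \<and> n \<le> q - 1 \<and> [n ^ d = 1] (mod q)}"
      proof
        fix n assume "n \<in> A"
        then have n: "1 \<le> n" "real n \<le> real q - 1" "smooth (real q powr \<delta>) n" unfolding A_def by auto
        have nq: "n \<le> q - 1" using n(2) by linarith
        have "[n ^ d = 1] (mod q)"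
        proof (rule smooth_pow[OF n(1)])
          fix p assume p: "prime p" "p dvd n"
          have pn: "p \<le> n" using p n(1) by (intro dvd_imp_le) auto
          have p1: "1 \<le> p" using p prime_ge_1_nat by simp
          have pq: "real p \<le> real q powr \<delta>" using n(3) p unfolding smooth_def by blast
          have c2: "[p ^ d2 = p ^ d1] (mod q)" using H p1 pq by blast
          have "\<not> q dvd p"
          proof
            assume "q dvd p"
            then have "q \<le> p" using p prime_gt_0_nat by (intro dvd_imp_le) auto
            then show False using pn nq qp prime_gt_1_nat[OF qp] by linarith
          qed
          then have "coprime q p" using prime_imp_coprime[OF qp] by blast
          then have cop: "coprime (p ^ d1) q" by (simp add: coprime_commute)
          have "[p ^ d1 * p ^ d = p ^ d1 * 1] (mod q)" using c2 d2eq by (simp add: power_add)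
          then show "[p ^ d = 1] (mod q)" using cong_mult_lcancel_nat[OF cop] by blast
        qed
        then show "n \<in> {n::nat. 1 \<le> n \<and> n \<le> q - 1 \<and> [n ^ d = 1] (mod q)}" using n nq by simp
      qed
      have "card A \<le> card {n::nat. 1 \<le> n \<and> n \<le> q - 1 \<and> [n ^ d = 1] (mod q)}"
        by (rule card_mono[OF _ sub]) simp
      also have "\<dots> \<le> d" by (rule roots_card[OF qp d0])
      finally show False using cardA by simp
    qed
  qed
qed

end
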